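(* Let $G$ be a trivalent graph with a perfect matching $M$, and let $\Gamma_M$ be a perfect matching graph for the pair $(G,M)$, represented by a ribbon diagram in the plane whose virtual crossings involve only edges of $G\setminus M$. Then for every positive integer $n$, $\left\llbracket \Gamma_M\right\rrbracket=\{G,M\}$.
   Context: Graphs are finite multigraphs. A ribbon graph of $G$ is an embedding of $G$ into a compact surface with boundary that deformation retracts onto the image of $G$; a perfect matching graph $\Gamma_M$ is a ribbon graph of $G$ with a perfect matching $M=\{e_1,\dots,e_\ell\}$. A ribbon diagram is a drawing of it in the plane respecting the cyclic order of edges at each vertex; edge crossings in the drawing are virtual crossings; let $X$ be the set of virtual crossings. Smoothings: for a matching edge $e=uv$ with other edge-ends $a,b$ at $u$ and $c,d$ at $v$, $a$ and $c$ on the same side of $e$, the $0$-smoothing deletes $e,u,v$ and joins $a$–$c$ and $b$–$d$ by two parallel arcs; the $1$-smoothing joins $a$–$d$ and $b$–$c$ by two arcs crossing once (an ordinary crossing). For $\alpha\in\{0,1\}^\ell$ the state $\Gamma_\alpha$ is the resulting collection of closed immersed curves, $|\alpha|=\sum\alpha_i$; each matching edge gives a pair of arcs of $\Gamma_\alpha$. Penrose–Kauffman bracket: $$\left\llbracket \Gamma_M\right\rrbracket=\sum_{\alpha\in\{0,1\}^\ell}\ \sum_{\beta:X\to\{\mathrm{node},\mathrm{cross}\}}(-1)^{|\alpha|}\,2^{\#\beta^{-1}(\mathrm{node})}\,(-1)^{\#\beta^{-1}(\mathrm{cross})}\,n^{c(\alpha,\beta)},$$ where $c(\alpha,\beta)$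 is the number of connected components of the space obtained from the disjoint union of the curves of $\Gamma_\alpha$ by gluing together the two strands at each virtual crossing $x$ with $\beta(x)=\mathrm{node}$ (strands at "cross" crossings just pass through). Equivalently it is defined recursively by: matching edge $=$ $0$-smoothing $-$ $1$-smoothing; virtual crossing $=2\cdot$(node, the two strands treated as part of one circle) $-$ (ordinary crossing); each closed curve, with curves joined at nodes counting as one, has value $n$. Color bracket: $\{G,M\}=\sum_{\alpha}N(\Gamma_\alpha)$, where $N(\Gamma_\alpha)$ is the number of assignments of colors from $\{1,\dots,n\}$ to the curves of $\Gamma_\alpha$ such that, for each matching edge, the two arcs produced by smoothing it lie on curves of different colors. This equals the number of perfect matching $n$-colorings of $(G,M)$: colorings of the non-matching edges with colors from $\{1,\dots,n\}$ such that exactly two distinct colors are used on the edges adjacent to each matching edge and both colors appear at each end of the matching edge. *)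

theory Defs
  imports Main "HOL-Library.FuncSet"
begin

text \<open>
Combinatorial encoding of a ribbon diagram (a drawing in the plane, i.e. on the
sphere) of a perfect matching graph, as a combinatorial map.

 * D : finite set of darts (half-edges) of the *drawing graph*: its vertices
   are the vertices of G (trivalent) and the virtual crossings (4-valent);
   its edges are the segments of edges of G between consecutive
   vertices/crossings.
 * alpha : fixed-point-free involution on D pairing the two ends of a segment.
 * sigma : permutation of D giving the cyclic (counterclockwise) order of
   darts around each vertex of the drawing (rotation system).
 * Mt : the darts belonging to matching edges.

A sigma-orbit of size 3 is a vertex of G, a sigma-orbit of size 4 is a virtual
crossing, whose two strands are d -- sigma (sigma d).  Planarity of the drawing
is the genus-zero (Euler) condition V - E + F = 2 K of the map.
\<close>

definition vorbit :: "('d \<Rightarrow> 'd) \<Rightarrow> 'd \<Rightarrow> 'd set" where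
  "vorbit f d = {(f ^^ k) d | k. True}"

definition orbrel :: "'d set \<Rightarrow> ('d \<Rightarrow> 'd) \<Rightarrow> ('d \<times> 'd) set" where
  "orbrel D f = {(x, y). x \<in> D \<and> y \<in> vorbit f x}"

definition conn :: "('d \<times> 'd) set \<Rightarrow> ('d \<times> 'd) set" where
  "conn L = (L \<union> L\<inverse>)\<^sup>*"

definition pm_diagram :: "'d set \<Rightarrow> ('d \<Rightarrow> 'd) \<Rightarrow> ('d \<Rightarrow> 'd) \<Rightarrow> 'd set \<Rightarrow> bool" where
  "pm_diagram D alpha sigma Mt \<longleftrightarrow>
     finite D \<and>
     (\<forall>d\<in>D. alpha d \<in> D \<and> alpha (alpha d) = d \<and> alpha d \<noteq> d) \<and>
     bij_betw sigma D D \<and>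
     (\<forall>d\<in>D. card (vorbit sigma d) = 3 \<or> card (vorbit sigma d) = 4) \<and>
     Mt \<subseteq> D \<and>
     (\<forall>m\<in>Mt. alpha m \<in> Mt \<and> card (vorbit sigma m) = 3 \<and> alpha m \<notin> vorbit sigma m) \<and>
     (\<forall>d\<in>D. card (vorbit sigma d) = 3 \<longrightarrow> card (vorbit sigma d \<inter> Mt) = 1) \<and>
     \<comment> \<open>every strand through virtual crossings ends at vertices of G (no extra closed curves)\<close>
     (\<forall>d\<in>D. \<exists>k. card (vorbit sigma (alpha (((\<lambda>x. sigma (sigma (alpha x))) ^^ k) d))) = 3) \<and>
     \<comment> \<open>planarity: Euler formula 2V - 2E + 2F = 4K, with 2E = card D\<close>
     2 * int (card (D // orbrel D sigma)) - int (card D)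
       + 2 * int (card (D // orbrel D (sigma \<circ> alpha)))
       = 4 * int (card (D // conn ({(d, sigma d) | d. d \<in> D} \<union> {(d, alpha d) | d. d \<in> D})))"

definition nm_darts :: "'d set \<Rightarrow> 'd set \<Rightarrow> 'd set" where
  "nm_darts D Mt = D - Mt"

definition match_edges :: "('d \<Rightarrow> 'd) \<Rightarrow> 'd set \<Rightarrow> 'd set set" where
  "match_edges alpha Mt = (\<lambda>m. {m, alpha m}) ` Mt"

definition vcrossings :: "'d set \<Rightarrow> ('d \<Rightarrow> 'd) \<Rightarrow> 'd set set" where
  "vcrossings D sigma = {vorbit sigma d | d. d \<in> D \<and> card (vorbit sigma d) = 4}"

text \<open>Links between darts in the state S (set of 1-smoothed matching edges) with
node set T (virtual crossings turned into nodes).  For a matching dart m at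
vertex u, sigma m and sigma (sigma m) (= sigma\<inverse> m) are the other darts at u.
The 0-smoothing joins sigma m with sigma\<inverse>(alpha m) and sigma\<inverse> m with
sigma (alpha m) (same side of the edge); the 1-smoothing joins
sigma m with sigma (alpha m) and sigma\<inverse> m with sigma\<inverse>(alpha m).\<close>
definition state_links ::
  "'d set \<Rightarrow> ('d \<Rightarrow> 'd) \<Rightarrow> ('d \<Rightarrow> 'd) \<Rightarrow> 'd set \<Rightarrow> 'd set set \<Rightarrow> 'd set set \<Rightarrow> ('d \<times> 'd) set" where
  "state_links D alpha sigma Mt S T =
     {(d, alpha d) | d. d \<in> nm_darts D Mt}
   \<union> {(d, sigma (sigma d)) | d. d \<in> D \<and> card (vorbit sigma d) = 4}
   \<union> {(d, sigma d) | d. d \<in> D \<and> vorbit sigma d \<in> T}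
   \<union> {(sigma m, sigma (alpha m)) | m. m \<in> Mt \<and> {m, alpha m} \<in> S}
   \<union> {(sigma (sigma m), sigma (sigma (alpha m))) | m. m \<in> Mt \<and> {m, alpha m} \<in> S}
   \<union> {(sigma m, sigma (sigma (alpha m))) | m. m \<in> Mt \<and> {m, alpha m} \<notin> S}
   \<union> {(sigma (sigma m), sigma (alpha m)) | m. m \<in> Mt \<and> {m, alpha m} \<notin> S}"

text \<open>c(alpha, beta): number of connected components of the state curves glued at nodes\<close>
definition ncomp :: "'d set \<Rightarrow> ('d \<Rightarrow> 'd) \<Rightarrow> ('d \<Rightarrow> 'd) \<Rightarrow> 'd set \<Rightarrow> 'd set set \<Rightarrow> 'd set set \<Rightarrow> nat" where
  "ncomp D alpha sigma Mt S T =
     card (nm_darts D Mt // conn (state_links D alpha sigma Mt S T))"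

definition pk_bracket :: "'d set \<Rightarrow> ('d \<Rightarrow> 'd) \<Rightarrow> ('d \<Rightarrow> 'd) \<Rightarrow> 'd set \<Rightarrow> nat \<Rightarrow> int" where
  "pk_bracket D alpha sigma Mt n =
     (\<Sum>S \<in> Pow (match_edges alpha Mt). \<Sum>T \<in> Pow (vcrossings D sigma).
        (-1) ^ card S * 2 ^ card T * (-1) ^ card (vcrossings D sigma - T)
          * int n ^ ncomp D alpha sigma Mt S T)"

text \<open>N(Gamma_S): colorings of the curves of the state S (no nodes) by {1..n} such that
for each matching edge the two arcs produced by smoothing it (containing sigma m
and sigma\<inverse> m respectively) lie on curves of different colors.\<close>
definition state_colorings :: "'d set \<Rightarrow> ('d \<Rightarrow> 'd) \<Rightarrow> ('d \<Rightarrow> 'd) \<Rightarrow> 'd set \<Rightarrow> 'd set set \<Rightarrow> nat \<Rightarrow> nat" where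
  "state_colorings D alpha sigma Mt S n =
     (let R = conn (state_links D alpha sigma Mt S {}) in
      card {g \<in> (nm_darts D Mt // R) \<rightarrow>\<^sub>E {1..n}.
              \<forall>m\<in>Mt. g (R `` {sigma m}) \<noteq> g (R `` {sigma (sigma m)})})"

definition color_bracket :: "'d set \<Rightarrow> ('d \<Rightarrow> 'd) \<Rightarrow> ('d \<Rightarrow> 'd) \<Rightarrow> 'd set \<Rightarrow> nat \<Rightarrow> int" where
  "color_bracket D alpha sigma Mt n =
     (\<Sum>S \<in> Pow (match_edges alpha Mt). int (state_colorings D alpha sigma Mt S n))"

end

theory Submission
  imports Defs "HOL-Library.Z2"
begin

definition sd :: "'a set \<Rightarrow> 'a set \<Rightarrow> 'a set" where "sd X Y = (X - Y) \<union> (Y - X)"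

lemma sd_iff: "x \<in> sd X Y \<longleftrightarrow> (x \<in> X) \<noteq> (x \<in> Y)" by (auto simp: sd_def)
lemma sd_sd: "sd (sd X Y) Y = X" by (auto simp: sd_def)
lemma sd_empty[simp]: "sd X {} = X" "sd {} X = X" "sd X X = {}" by (auto simp: sd_def)

lemma card_xor:
  assumes "finite Y"
  shows "card {x\<in>Y. P x \<noteq> Q x} + 2 * card {x\<in>Y. P x \<and> Q x} = card {x\<in>Y. P x} + card {x\<in>Y. Q x}"
proof -
  have 1: "{x\<in>Y. P x} = {x\<in>Y. P x \<and> \<not> Q x} \<union> {x\<in>Y. P x \<and> Q x}" by auto
  have 2: "{x\<in>Y. Q x} = {x\<in>Y. Q x \<and> \<not> P x} \<union> {x\<in>Y. P x \<and> Q x}" by auto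
  have 3: "{x\<in>Y. P x \<noteq> Q x} = {x\<in>Y. P x \<and> \<not> Q x} \<union> {x\<in>Y. Q x \<and> \<not> P x}" by auto
  have c1: "card {x\<in>Y. P x} = card {x\<in>Y. P x \<and> \<not> Q x} + card {x\<in>Y. P x \<and> Q x}"
    unfolding 1 by (rule card_Un_disjoint) (use assms in auto)
  have c2: "card {x\<in>Y. Q x} = card {x\<in>Y. Q x \<and> \<not> P x} + card {x\<in>Y. P x \<and> Q x}"
    unfolding 2 by (rule card_Un_disjoint) (use assms in auto)
  have c3: "card {x\<in>Y. P x \<noteq> Q x} = card {x\<in>Y. P x \<and> \<not> Q x} + card {x\<in>Y. Q x \<and> \<not> P x}"
    unfolding 3 by (rule card_Un_disjoint) (use assms in auto)
  show ?thesis using c1 c2 c3 by simp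
qed

lemma card_sd_parity:
  assumes "finite Y"
  shows "card (Y \<inter> sd b c) + 2 * card (Y \<inter> b \<inter> c) = card (Y \<inter> b) + card (Y \<inter> c)"
proof -
  have "card {x\<in>Y. (x\<in>b) \<noteq> (x\<in>c)} + 2 * card {x\<in>Y. x\<in>b \<and> x\<in>c} = card {x\<in>Y. x\<in>b} + card {x\<in>Y. x\<in>c}"
    by (rule card_xor[OF assms])
  moreover have "{x\<in>Y. (x\<in>b) \<noteq> (x\<in>c)} = Y \<inter> sd b c" by (auto simp: sd_def)
  moreover have "{x\<in>Y. x\<in>b \<and> x\<in>c} = Y \<inter> b \<inter> c" by auto
  moreover have "{x\<in>Y. x\<in>b} = Y \<inter> b" by auto
  moreover have "{x\<in>Y. x\<in>c} = Y \<inter> c" by auto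
  ultimately show ?thesis by simp
qed

lemma funpow_in: "bij_betw \<sigma> D D \<Longrightarrow> x \<in> D \<Longrightarrow> (\<sigma>^^k) x \<in> D"
  using bij_betw_funpow bij_betwE by metis

lemma funpow_apply_add: "(f^^m) ((f^^n) x) = (f^^(m+n)) x"
  by (simp add: funpow_add)

lemma funpow_mult_fix: "(\<sigma>^^p) x = x \<Longrightarrow> (\<sigma>^^(p*q)) x = x"
proof (induction q)
  case 0 then show ?case by simp
next
  case (Suc q)
  have e: "p * Suc q = p*q + p" by simp
  have "(\<sigma>^^(p * Suc q)) x = (\<sigma>^^(p*q)) ((\<sigma>^^p) x)"
    unfolding e funpow_apply_add ..
  then show ?case using Suc by simp
qed

lemma period_exists:
  assumes "finite D" "bij_betw \<sigma> D D" "x \<in> D"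
  shows "\<exists>p>0. (\<sigma>^^p) x = x"
proof -
  let ?f = "\<lambda>i. (\<sigma>^^i) x"
  have sub: "?f ` {..card D} \<subseteq> D" using funpow_in[OF assms(2,3)] by auto
  have "\<not> inj_on ?f {..card D}"
  proof
    assume "inj_on ?f {..card D}"
    then have "card (?f ` {..card D}) = card D + 1" by (simp add: card_image)
    moreover have "card (?f ` {..card D}) \<le> card D" using card_mono[OF assms(1) sub] .
    ultimately show False by simp
  qed
  then obtain i j where ij: "i \<le> card D" "j \<le> card D" "i \<noteq> j" "?f i = ?f j"
    by (auto simp: inj_on_def)
  have key: "\<exists>p>0. (\<sigma>^^p) x = x" if "i < j" "?f i = ?f j" for i j
  proof -
    have inj: "inj_on (\<sigma>^^i) D" using bij_betw_funpow[OF assms(2)] bij_betw_imp_inj_on by blast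
    have "(\<sigma>^^i) ((\<sigma>^^(j-i)) x) = (\<sigma>^^j) x"
      using that(1) by (simp add: funpow_apply_add)
    then have "(\<sigma>^^i) ((\<sigma>^^(j-i)) x) = (\<sigma>^^i) x" using that(2) by simp
    then have "(\<sigma>^^(j-i)) x = x"
      using inj_onD[OF inj _ funpow_in[OF assms(2,3)] assms(3)] by blast
    then show ?thesis using that(1) by (intro exI[of _ "j-i"]) simp
  qed
  show ?thesis
  proof (cases "i < j")
    case True then show ?thesis using key ij by blast
  next
    case False then have "j < i" using ij by simp
    then show ?thesis using key ij by metis
  qed
qed

lemma vorbit_iff: "y \<in> vorbit \<sigma> x \<longleftrightarrow> (\<exists>k. y = (\<sigma>^^k) x)"
  by (auto simp: vorbit_def)

lemma vorbit_self[simp]: "x \<in> vorbit \<sigma> x"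
  unfolding vorbit_iff by (rule exI[of _ 0]) simp

lemma vorbit_step: "y \<in> vorbit \<sigma> x \<Longrightarrow> \<sigma> y \<in> vorbit \<sigma> x"
  unfolding vorbit_iff by (metis comp_apply funpow.simps(2))

lemma vorbit_step1[simp]: "\<sigma> x \<in> vorbit \<sigma> x"
  by (rule vorbit_step) simp

lemma vorbit_funpow: "(\<sigma>^^k) x \<in> vorbit \<sigma> x"
  unfolding vorbit_iff by blast

lemma vorbit_subset: "bij_betw \<sigma> D D \<Longrightarrow> x \<in> D \<Longrightarrow> vorbit \<sigma> x \<subseteq> D"
  using funpow_in by (auto simp: vorbit_iff)

lemma vorbit_trans: "y \<in> vorbit \<sigma> x \<Longrightarrow> vorbit \<sigma> y \<subseteq> vorbit \<sigma> x"
proof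
  fix z assume "y \<in> vorbit \<sigma> x" "z \<in> vorbit \<sigma> y"
  then obtain k j where "y = (\<sigma>^^k) x" "z = (\<sigma>^^j) y" unfolding vorbit_iff by blast
  then have "z = (\<sigma>^^(j+k)) x" by (simp add: funpow_apply_add)
  then show "z \<in> vorbit \<sigma> x" unfolding vorbit_iff by blast
qed

lemma vorbit_sym:
  assumes "finite D" "bij_betw \<sigma> D D" "x \<in> D" "y \<in> vorbit \<sigma> x"
  shows "x \<in> vorbit \<sigma> y"
proof -
  obtain k where k: "y = (\<sigma>^^k) x" using assms(4) vorbit_iff by metis
  obtain p where p: "p > 0" "(\<sigma>^^p) x = x" using period_exists[OF assms(1-3)] by blast
  have "(\<sigma>^^(p*k)) x = x" by (rule funpow_mult_fix[OF p(2)])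
  moreover have "p * k = (p - 1) * k + k" using p(1)
    by (metis Suc_diff_1 add.commute mult_Suc)
  ultimately have "(\<sigma>^^((p - 1) * k)) y = x" using k by (simp add: funpow_apply_add)
  then show ?thesis unfolding vorbit_iff by metis
qed

lemma vorbit_eq:
  assumes "finite D" "bij_betw \<sigma> D D" "x \<in> D" "y \<in> vorbit \<sigma> x"
  shows "vorbit \<sigma> y = vorbit \<sigma> x"
  using vorbit_trans[OF assms(4)] vorbit_trans[OF vorbit_sym[OF assms]] by (rule equalityI)

lemma vorbit_pred:
  assumes "finite D" "bij_betw \<sigma> D D" "x \<in> D" "z \<in> vorbit \<sigma> x"
  shows "\<exists>y\<in>vorbit \<sigma> x. \<sigma> y = z"
proof -
  have zD: "z \<in> D" using vorbit_subset[OF assms(2,3)] assms(4) by blast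
  obtain p where p: "p > 0" "(\<sigma>^^p) z = z" using period_exists[OF assms(1,2) zD] by blast
  have "\<sigma> ((\<sigma>^^(p-1)) z) = z" using p by (metis Suc_diff_1 comp_apply funpow.simps(2))
  moreover have "(\<sigma>^^(p-1)) z \<in> vorbit \<sigma> x"
    using vorbit_eq[OF assms] vorbit_funpow by metis
  ultimately show ?thesis by blast
qed

lemma vorbit_image:
  assumes "finite D" "bij_betw \<sigma> D D" "x \<in> D"
  shows "\<sigma> ` vorbit \<sigma> x = vorbit \<sigma> x"
proof
  show "\<sigma> ` vorbit \<sigma> x \<subseteq> vorbit \<sigma> x" using vorbit_step by (auto simp del: vorbit_self)
  show "vorbit \<sigma> x \<subseteq> \<sigma> ` vorbit \<sigma> x"
  proof
    fix z assume "z \<in> vorbit \<sigma> x"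
    then obtain y where "y \<in> vorbit \<sigma> x" "\<sigma> y = z" using vorbit_pred[OF assms] by blast
    then show "z \<in> \<sigma> ` vorbit \<sigma> x" by blast
  qed
qed

lemma vorbit_structure:
  assumes "finite D" "bij_betw \<sigma> D D" "x \<in> D"
  shows "\<exists>p>0. (\<sigma>^^p) x = x \<and> vorbit \<sigma> x = (\<lambda>i. (\<sigma>^^i) x) ` {..<p}
            \<and> inj_on (\<lambda>i. (\<sigma>^^i) x) {..<p}"
proof -
  define p where "p = (LEAST p. p > 0 \<and> (\<sigma>^^p) x = x)"
  have ex: "\<exists>p. p > 0 \<and> (\<sigma>^^p) x = x" using period_exists[OF assms] by blast
  have p: "p > 0" "(\<sigma>^^p) x = x" using LeastI_ex[OF ex] unfolding p_def by auto
  have min: "\<not> (q > 0 \<and> (\<sigma>^^q) x = x)" if "q < p" for q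
    using not_less_Least[of q "\<lambda>p. p > 0 \<and> (\<sigma>^^p) x = x"] that unfolding p_def by blast
  have modp: "(\<sigma>^^k) x = (\<sigma>^^(k mod p)) x" for k
  proof -
    have "k = k mod p + p * (k div p)" by simp
    then have "(\<sigma>^^k) x = (\<sigma>^^(k mod p)) ((\<sigma>^^(p * (k div p))) x)"
      by (metis funpow_apply_add)
    then show ?thesis using funpow_mult_fix[OF p(2)] by simp
  qed
  have "vorbit \<sigma> x = (\<lambda>i. (\<sigma>^^i) x) ` {..<p}"
  proof
    show "vorbit \<sigma> x \<subseteq> (\<lambda>i. (\<sigma>^^i) x) ` {..<p}"
    proof
      fix z assume "z \<in> vorbit \<sigma> x"
      then obtain k where "z = (\<sigma>^^k) x" unfolding vorbit_iff by blast
      then have "z = (\<sigma>^^(k mod p)) x" "k mod p < p" using modp p(1) by auto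
      then show "z \<in> (\<lambda>i. (\<sigma>^^i) x) ` {..<p}" by blast
    qed
    show "(\<lambda>i. (\<sigma>^^i) x) ` {..<p} \<subseteq> vorbit \<sigma> x" by (auto simp: vorbit_funpow)
  qed
  moreover have "inj_on (\<lambda>i. (\<sigma>^^i) x) {..<p}"
  proof -
    have "i = j" if "i < p" "j < p" "(\<sigma>^^i) x = (\<sigma>^^j) x" "i < j" for i j
    proof -
      have inj: "inj_on (\<sigma>^^i) D" using bij_betw_funpow[OF assms(2)] bij_betw_imp_inj_on by blast
      have "(\<sigma>^^i) ((\<sigma>^^(j-i)) x) = (\<sigma>^^j) x"
        using that(4) by (simp add: funpow_apply_add)
      then have "(\<sigma>^^i) ((\<sigma>^^(j-i)) x) = (\<sigma>^^i) x" using that(3) by simp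
      then have "(\<sigma>^^(j-i)) x = x"
        using inj_onD[OF inj _ funpow_in[OF assms(2,3)] assms(3)] by blast
      moreover have "j - i < p" "j - i > 0" using that by auto
      ultimately show ?thesis using min by blast
    qed
    then show ?thesis unfolding inj_on_def by (metis lessThan_iff linorder_neqE_nat)
  qed
  ultimately show ?thesis using p by blast
qed

lemma vorbit_card:
  assumes "finite D" "bij_betw \<sigma> D D" "x \<in> D" "card (vorbit \<sigma> x) = k"
  shows "k > 0 \<and> (\<sigma>^^k) x = x \<and> vorbit \<sigma> x = (\<lambda>i. (\<sigma>^^i) x) ` {..<k}
            \<and> inj_on (\<lambda>i. (\<sigma>^^i) x) {..<k}"
proof -
  obtain p where p: "p>0" "(\<sigma>^^p) x = x" "vorbit \<sigma> x = (\<lambda>i. (\<sigma>^^i) x) ` {..<p}"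
    "inj_on (\<lambda>i. (\<sigma>^^i) x) {..<p}" using vorbit_structure[OF assms(1-3)] by blast
  have "card (vorbit \<sigma> x) = p" using p(3,4) by (simp add: card_image)
  then have "p = k" using assms(4) by simp
  then show ?thesis using p by blast
qed

lemma vorbit_finite: "finite D \<Longrightarrow> bij_betw \<sigma> D D \<Longrightarrow> x \<in> D \<Longrightarrow> finite (vorbit \<sigma> x)"
  using vorbit_subset[of \<sigma> D x] finite_subset by blast

lemma vorbit_disj:
  assumes "finite D" "bij_betw \<sigma> D D" "x \<in> D" "y \<in> D" "vorbit \<sigma> x \<noteq> vorbit \<sigma> y"
  shows "vorbit \<sigma> x \<inter> vorbit \<sigma> y = {}"
proof (rule ccontr)
  assume "vorbit \<sigma> x \<inter> vorbit \<sigma> y \<noteq> {}"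
  then obtain z where "z \<in> vorbit \<sigma> x" "z \<in> vorbit \<sigma> y" by blast
  then have "vorbit \<sigma> z = vorbit \<sigma> x" "vorbit \<sigma> z = vorbit \<sigma> y"
    using vorbit_eq assms by metis+
  then show False using assms(5) by simp
qed

lemma orbrel_equiv:
  assumes "finite D" "bij_betw \<sigma> D D"
  shows "equiv D (orbrel D \<sigma>)"
proof (rule equivI)
  show "refl_on D (orbrel D \<sigma>)"
    unfolding refl_on_def orbrel_def using vorbit_subset[OF assms(2)] by auto
  show "sym (orbrel D \<sigma>)"
  proof (rule symI)
    fix x y assume "(x,y) \<in> orbrel D \<sigma>"
    then have "x \<in> D" "y \<in> vorbit \<sigma> x" by (auto simp: orbrel_def)
    moreover have "y \<in> D" using calculation vorbit_subset[OF assms(2)] by blast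
    ultimately show "(y,x) \<in> orbrel D \<sigma>" using vorbit_sym[OF assms] by (auto simp: orbrel_def)
  qed
  show "trans (orbrel D \<sigma>)"
  proof (rule transI)
    fix x y z assume "(x,y) \<in> orbrel D \<sigma>" "(y,z) \<in> orbrel D \<sigma>"
    then show "(x,z) \<in> orbrel D \<sigma>" using vorbit_trans[of y \<sigma> x] by (auto simp: orbrel_def)
  qed
  show "orbrel D \<sigma> \<subseteq> D \<times> D" using vorbit_subset[OF assms(2)] by (auto simp: orbrel_def)
qed

lemma orbrel_image: "x \<in> D \<Longrightarrow> orbrel D \<sigma> `` {x} = vorbit \<sigma> x"
  by (auto simp: orbrel_def)

lemma orbrel_quotient: "D // orbrel D \<sigma> = vorbit \<sigma> ` D"
  unfolding quotient_def using orbrel_image by fastforce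

lemma bij_betw_restrict_pred:
  "bij_betw f X Y \<Longrightarrow> bij_betw f {x\<in>X. Q (f x)} {y\<in>Y. Q y}"
  unfolding bij_betw_def inj_on_def by auto

lemma quot_fun_bij:
  assumes "equiv A R"
  shows "bij_betw (\<lambda>g. \<lambda>x\<in>A. g (R``{x})) (A//R \<rightarrow>\<^sub>E B)
           {h\<in>A \<rightarrow>\<^sub>E B. \<forall>x\<in>A. \<forall>y\<in>A. (x,y)\<in>R \<longrightarrow> h x = h y}"
proof (rule bij_betw_byWitness[where f'="\<lambda>h. \<lambda>c\<in>A//R. h (SOME x. x \<in> c)"])
  have cls: "R``{x} \<in> A//R" if "x \<in> A" for x using that by (rule quotientI)
  have some: "(SOME z. z \<in> R``{x}) \<in> R``{x}" if "x \<in> A" for x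
    using that assms by (meson equiv_class_self someI_ex)
  show "\<forall>g\<in>A//R \<rightarrow>\<^sub>E B. (\<lambda>c\<in>A//R. (\<lambda>x\<in>A. g (R``{x})) (SOME x. x \<in> c)) = g"
  proof
    fix g assume g: "g \<in> A//R \<rightarrow>\<^sub>E B"
    show "(\<lambda>c\<in>A//R. (\<lambda>x\<in>A. g (R``{x})) (SOME x. x \<in> c)) = g"
    proof
      fix c show "(\<lambda>c\<in>A//R. (\<lambda>x\<in>A. g (R``{x})) (SOME x. x \<in> c)) c = g c"
      proof (cases "c \<in> A//R")
        case True
        then obtain a where a: "a \<in> A" "c = R``{a}" unfolding quotient_def by blast
        have s: "(SOME x. x \<in> c) \<in> c" using some a by simp
        then have sA: "(SOME x. x \<in> c) \<in> A" using a assms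
          by (metis ImageE equiv_class_eq_iff)
        have "R``{SOME x. x \<in> c} = c" using s a assms
          by (metis equiv_class_eq_iff Image_singleton_iff equiv_class_eq)
        then show ?thesis using True sA by simp
      next
        case False then show ?thesis using g by (auto simp: PiE_def extensional_def)
      qed
    qed
  qed
  show "\<forall>h\<in>{h\<in>A \<rightarrow>\<^sub>E B. \<forall>x\<in>A. \<forall>y\<in>A. (x,y)\<in>R \<longrightarrow> h x = h y}.
          (\<lambda>x\<in>A. (\<lambda>c\<in>A//R. h (SOME x. x \<in> c)) (R``{x})) = h"
  proof
    fix h assume h: "h \<in> {h\<in>A \<rightarrow>\<^sub>E B. \<forall>x\<in>A. \<forall>y\<in>A. (x,y)\<in>R \<longrightarrow> h x = h y}"
    show "(\<lambda>x\<in>A. (\<lambda>c\<in>A//R. h (SOME x. x \<in> c)) (R``{x})) = h"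
    proof
      fix x show "(\<lambda>x\<in>A. (\<lambda>c\<in>A//R. h (SOME x. x \<in> c)) (R``{x})) x = h x"
      proof (cases "x \<in> A")
        case True
        have s: "(SOME z. z \<in> R``{x}) \<in> R``{x}" using some True .
        then have "(x, SOME z. z \<in> R``{x}) \<in> R" by simp
        moreover then have "(SOME z. z \<in> R``{x}) \<in> A" using assms by (meson equiv_class_eq_iff)
        ultimately show ?thesis using True h cls by auto
      next
        case False then show ?thesis using h by (auto simp: PiE_def extensional_def)
      qed
    qed
  qed
  show "(\<lambda>g. \<lambda>x\<in>A. g (R``{x})) ` (A//R \<rightarrow>\<^sub>E B) \<subseteq> {h\<in>A \<rightarrow>\<^sub>E B. \<forall>x\<in>A. \<forall>y\<in>A. (x,y)\<in>R \<longrightarrow> h x = h y}"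
  proof (rule subsetI)
    fix h assume "h \<in> (\<lambda>g. \<lambda>x\<in>A. g (R``{x})) ` (A//R \<rightarrow>\<^sub>E B)"
    then obtain g where g: "g \<in> A//R \<rightarrow>\<^sub>E B" "h = (\<lambda>x\<in>A. g (R``{x}))" by blast
    have "h \<in> A \<rightarrow>\<^sub>E B" using g cls by auto
    moreover have "h x = h y" if "x\<in>A" "y\<in>A" "(x,y)\<in>R" for x y
      using that g assms by (simp add: equiv_class_eq)
    ultimately show "h \<in> {h\<in>A \<rightarrow>\<^sub>E B. \<forall>x\<in>A. \<forall>y\<in>A. (x,y)\<in>R \<longrightarrow> h x = h y}" by blast
  qed
  show "(\<lambda>h. \<lambda>c\<in>A//R. h (SOME x. x \<in> c)) ` {h\<in>A \<rightarrow>\<^sub>E B. \<forall>x\<in>A. \<forall>y\<in>A. (x,y)\<in>R \<longrightarrow> h x = h y} \<subseteq> A//R \<rightarrow>\<^sub>E B"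
  proof (rule subsetI)
    fix g assume "g \<in> (\<lambda>h. \<lambda>c\<in>A//R. h (SOME x. x \<in> c)) ` {h\<in>A \<rightarrow>\<^sub>E B. \<forall>x\<in>A. \<forall>y\<in>A. (x,y)\<in>R \<longrightarrow> h x = h y}"
    then obtain h where h: "h \<in> A \<rightarrow>\<^sub>E B" "g = (\<lambda>c\<in>A//R. h (SOME x. x \<in> c))" by blast
    have "(SOME x. x \<in> c) \<in> A" if cA: "c \<in> A//R" for c
    proof -
      obtain a where a: "a \<in> A" "c = R``{a}" using cA unfolding quotient_def by blast
      then show ?thesis using some[OF a(1)] assms by (metis equiv_class_eq_iff ImageE)
    qed
    then show "g \<in> A//R \<rightarrow>\<^sub>E B" using h by auto
  qed
qed

lemma quot_fun_card:
  assumes "finite A" "equiv A R"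
  shows "card {h\<in>A \<rightarrow>\<^sub>E B. \<forall>x\<in>A. \<forall>y\<in>A. (x,y)\<in>R \<longrightarrow> h x = h y} = card B ^ card (A//R)"
proof -
  have "card {h\<in>A \<rightarrow>\<^sub>E B. \<forall>x\<in>A. \<forall>y\<in>A. (x,y)\<in>R \<longrightarrow> h x = h y} = card (A//R \<rightarrow>\<^sub>E B)"
    using bij_betw_same_card[OF quot_fun_bij[OF assms(2)]] by (rule sym)
  also have "\<dots> = card B ^ card (A//R)"
    using finite_quotient[OF assms(1) equiv_type[OF assms(2)]] by (simp add: card_PiE)
  finally show ?thesis .
qed

lemma quot_set_card:
  assumes "finite A" "equiv A R"
  shows "card {U. U \<subseteq> A \<and> (\<forall>x\<in>A. \<forall>y\<in>A. (x,y)\<in>R \<longrightarrow> (x\<in>U \<longleftrightarrow> y\<in>U))} = 2 ^ card (A//R)"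
proof -
  let ?F = "{h\<in>A \<rightarrow>\<^sub>E (UNIV::bool set). \<forall>x\<in>A. \<forall>y\<in>A. (x,y)\<in>R \<longrightarrow> h x = h y}"
  have "bij_betw (\<lambda>h. {x\<in>A. h x}) ?F {U. U \<subseteq> A \<and> (\<forall>x\<in>A. \<forall>y\<in>A. (x,y)\<in>R \<longrightarrow> (x\<in>U \<longleftrightarrow> y\<in>U))}"
  proof (rule bij_betw_byWitness[where f'="\<lambda>U. \<lambda>x\<in>A. x \<in> U"])
    show "\<forall>a\<in>?F. (\<lambda>x\<in>A. x \<in> {x \<in> A. a x}) = a"
      by (auto simp: PiE_def extensional_def fun_eq_iff)
  qed (auto simp: PiE_def extensional_def)
  then have "card {U. U \<subseteq> A \<and> (\<forall>x\<in>A. \<forall>y\<in>A. (x,y)\<in>R \<longrightarrow> (x\<in>U \<longleftrightarrow> y\<in>U))} = card ?F"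
    by (simp add: bij_betw_same_card)
  also have "\<dots> = 2 ^ card (A//R)" using quot_fun_card[OF assms, of "UNIV::bool set"] by simp
  finally show ?thesis .
qed

lemma conn_sym: "(x,y) \<in> conn L \<Longrightarrow> (y,x) \<in> conn L"
  unfolding conn_def
proof -
  assume "(x,y) \<in> (L \<union> L\<inverse>)\<^sup>*"
  then have "(y,x) \<in> ((L \<union> L\<inverse>)\<inverse>)\<^sup>*" by (simp add: rtrancl_converse)
  moreover have "(L \<union> L\<inverse>)\<inverse> = L \<union> L\<inverse>" by auto
  ultimately show "(y,x) \<in> (L \<union> L\<inverse>)\<^sup>*" by simp
qed

lemma conn_trans: "(x,y) \<in> conn L \<Longrightarrow> (y,z) \<in> conn L \<Longrightarrow> (x,z) \<in> conn L"
  unfolding conn_def by (rule rtrancl_trans)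

lemma conn_refl[simp]: "(x,x) \<in> conn L" unfolding conn_def by simp

lemma conn_base: "(x,y) \<in> L \<Longrightarrow> (x,y) \<in> conn L" unfolding conn_def by auto

lemma conn_closed:
  assumes "L \<subseteq> A \<times> A" "(x,y) \<in> conn L" "x \<in> A"
  shows "y \<in> A"
  using assms(2,3) unfolding conn_def
  by (induction rule: rtrancl_induct) (use assms(1) in auto)

lemma conn_resp:
  assumes "\<forall>(x,y)\<in>L. h x = h y" "(x,y) \<in> conn L"
  shows "h x = h y"
  using assms(2) unfolding conn_def
  by (induction rule: rtrancl_induct) (use assms(1) in auto)

lemma conn_equiv: "L \<subseteq> A \<times> A \<Longrightarrow> equiv A (conn L \<inter> A \<times> A)"
proof (rule equivI)
  show "refl_on A (conn L \<inter> A \<times> A)" unfolding refl_on_def by auto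
  show "sym (conn L \<inter> A \<times> A)" by (rule symI) (use conn_sym[of _ _ L] in blast)
  show "trans (conn L \<inter> A \<times> A)" by (rule transI) (use conn_trans[of _ _ L] in blast)
  show "conn L \<inter> A \<times> A \<subseteq> A \<times> A" by blast
qed

lemma conn_image:
  assumes "L \<subseteq> A \<times> A" "x \<in> A"
  shows "conn L `` {x} = (conn L \<inter> A \<times> A) `` {x}"
  using conn_closed[OF assms(1) _ assms(2)] assms(2) by blast

lemma conn_quot: "L \<subseteq> A \<times> A \<Longrightarrow> A // conn L = A // (conn L \<inter> A \<times> A)"
  unfolding quotient_def using conn_image[of L A] by simp

lemma conn_fun_card:
  assumes "finite A" "L \<subseteq> A \<times> A"
  shows "card {h\<in>A \<rightarrow>\<^sub>E B. \<forall>(x,y)\<in>L. h x = h y} = card B ^ card (A // conn L)"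
proof -
  have "{h\<in>A \<rightarrow>\<^sub>E B. \<forall>(x,y)\<in>L. h x = h y} =
        {h\<in>A \<rightarrow>\<^sub>E B. \<forall>x\<in>A. \<forall>y\<in>A. (x,y) \<in> conn L \<inter> A \<times> A \<longrightarrow> h x = h y}"
    using conn_resp[of L] conn_base[of _ _ L] assms(2) by blast
  then show ?thesis using quot_fun_card[OF assms(1) conn_equiv[OF assms(2)]] conn_quot[OF assms(2)]
    by simp
qed

lemma conn_set_card:
  assumes "finite A" "L \<subseteq> A \<times> A"
  shows "card {U. U \<subseteq> A \<and> (\<forall>(x,y)\<in>L. x\<in>U \<longleftrightarrow> y\<in>U)} = 2 ^ card (A // conn L)"
proof -
  have iff: "(\<forall>(x,y)\<in>L. x\<in>U \<longleftrightarrow> y\<in>U) \<longleftrightarrow>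
        (\<forall>x\<in>A. \<forall>y\<in>A. (x,y) \<in> conn L \<inter> A \<times> A \<longrightarrow> (x\<in>U \<longleftrightarrow> y\<in>U))" for U
  proof
    assume H: "\<forall>(x,y)\<in>L. x\<in>U \<longleftrightarrow> y\<in>U"
    show "\<forall>x\<in>A. \<forall>y\<in>A. (x,y) \<in> conn L \<inter> A \<times> A \<longrightarrow> (x\<in>U \<longleftrightarrow> y\<in>U)"
    proof (intro ballI impI)
      fix x y assume "(x,y) \<in> conn L \<inter> A \<times> A"
      then have "(x,y) \<in> conn L" by blast
      from conn_resp[of L "\<lambda>x. x \<in> U", OF H this] show "x\<in>U \<longleftrightarrow> y\<in>U" .
    qed
  next
    assume H: "\<forall>x\<in>A. \<forall>y\<in>A. (x,y) \<in> conn L \<inter> A \<times> A \<longrightarrow> (x\<in>U \<longleftrightarrow> y\<in>U)"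
    show "\<forall>(x,y)\<in>L. x\<in>U \<longleftrightarrow> y\<in>U"
    proof (clarify)
      fix x y assume xy: "(x,y) \<in> L"
      have "(x,y) \<in> A \<times> A" using assms(2) xy by (rule subsetD)
      then have "x \<in> A" "y \<in> A" by auto
      moreover have "(x,y) \<in> conn L" using xy by (rule conn_base)
      ultimately show "x\<in>U \<longleftrightarrow> y\<in>U" using H by blast
    qed
  qed
  have "{U. U \<subseteq> A \<and> (\<forall>(x,y)\<in>L. x\<in>U \<longleftrightarrow> y\<in>U)} =
        {U. U \<subseteq> A \<and> (\<forall>x\<in>A. \<forall>y\<in>A. (x,y) \<in> conn L \<inter> A \<times> A \<longrightarrow> (x\<in>U \<longleftrightarrow> y\<in>U))}"
    by (intro Collect_cong conj_cong refl iff)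
  then show ?thesis unfolding conn_quot[OF assms(2)]
    using quot_set_card[OF assms(1) conn_equiv[OF assms(2)]] by (simp only:)
qed

lemma half_exists:
  assumes "finite S" "\<forall>x\<in>S. f x \<in> S \<and> f (f x) = x \<and> f x \<noteq> x"
  shows "\<exists>H. H \<subseteq> S \<and> H \<inter> f ` H = {} \<and> H \<union> f ` H = S"
  using assms
proof (induction "card S" arbitrary: S rule: less_induct)
  case less
  show ?case
  proof (cases "S = {}")
    case True then show ?thesis by auto
  next
    case False
    then obtain x where x: "x \<in> S" by blast
    let ?S' = "S - {x, f x}"
    have fx: "f x \<in> S" "f (f x) = x" "f x \<noteq> x" using less.prems x by auto
    have S': "\<forall>y\<in>?S'. f y \<in> ?S' \<and> f (f y) = y \<and> f y \<noteq> y"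
      using less.prems fx by (metis Diff_iff insert_iff singletonD)
    have "card ?S' < card S" using x less.prems(1) by (intro psubset_card_mono) auto
    then obtain H where H: "H \<subseteq> ?S'" "H \<inter> f ` H = {}" "H \<union> f ` H = ?S'"
      using less.hyps[OF _ _ S'] less.prems(1) by blast
    have "f ` H \<subseteq> ?S'" using H by blast
    have "insert x H \<subseteq> S" using H x by blast
    moreover have "insert x H \<inter> f ` insert x H = {}"
    proof -
      have "x \<notin> f ` H" using H(1) less.prems by (metis Diff_iff image_iff insertCI subsetD)
      moreover have "f x \<notin> H" using H(1) by blast
      ultimately show ?thesis using H(2) fx(3) by auto
    qed
    moreover have "insert x H \<union> f ` insert x H = S" using H(3) x fx by auto
    ultimately show ?thesis by blast
  qed
qed

lemma even_card_involution:
  assumes "finite P" "\<forall>x\<in>P. f x \<in> P \<and> f (f x) = x \<and> f x \<noteq> x"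
  shows "even (card P)"
proof -
  obtain H where H: "H \<subseteq> P" "H \<inter> f ` H = {}" "H \<union> f ` H = P"
    using half_exists[OF assms] by blast
  have fin: "finite H" using H(1) assms(1) finite_subset by blast
  have inj: "inj_on f H" using H(1) assms(2) by (metis inj_onI subsetD)
  have "card P = card H + card (f ` H)" using H fin by (metis card_Un_disjoint finite_imageI)
  also have "\<dots> = 2 * card H" using card_image[OF inj] by simp
  finally show ?thesis by simp
qed

lemma sum_involution_zero:
  assumes "finite A" "\<forall>x\<in>A. f x \<in> A \<and> f (f x) = x" "\<forall>x\<in>A. g (f x) = - g x"
  shows "sum g A = (0::int)"
proof -
  have bij: "bij_betw f A A" by (rule bij_betw_byWitness[where f'=f]) (use assms(2) in auto)
  have "sum g A = sum (\<lambda>x. g (f x)) A" using sum.reindex_bij_betw[OF bij, of g] by simp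
  also have "\<dots> = - sum g A" using assms(3) by (simp add: sum_negf)
  finally show ?thesis by simp
qed

lemma img_ker_card:
  assumes "finite C" "\<forall>U\<in>C. \<forall>V\<in>C. sd U V \<in> C"
    "\<forall>U\<in>C. \<forall>V\<in>C. T (sd U V) = sd (T U) (T V)"
  shows "card (T ` C) * card {U\<in>C. T U = {}} = card C"
proof -
  have fib: "card {U\<in>C. T U = Y} = card {U\<in>C. T U = {}}" if YT: "Y \<in> T ` C" for Y
  proof -
    obtain U0 where U0: "U0 \<in> C" "Y = T U0" using YT by blast
    have "bij_betw (\<lambda>U. sd U U0) {U\<in>C. T U = {}} {U\<in>C. T U = Y}"
    proof (rule bij_betw_byWitness[where f'="\<lambda>U. sd U U0"])
      show "\<forall>a\<in>{U \<in> C. T U = {}}. sd (sd a U0) U0 = a" by (simp add: sd_sd)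
      show "\<forall>a\<in>{U \<in> C. T U = Y}. sd (sd a U0) U0 = a" by (simp add: sd_sd)
      show "(\<lambda>U. sd U U0) ` {U \<in> C. T U = {}} \<subseteq> {U \<in> C. T U = Y}"
      proof (rule image_subsetI)
        fix U assume U: "U \<in> {U \<in> C. T U = {}}"
        then have "sd U U0 \<in> C" "T (sd U U0) = sd (T U) (T U0)" using assms(2,3) U0(1) by blast+
        then show "sd U U0 \<in> {U \<in> C. T U = Y}" using U U0(2) by simp
      qed
      show "(\<lambda>U. sd U U0) ` {U \<in> C. T U = Y} \<subseteq> {U \<in> C. T U = {}}"
      proof (rule image_subsetI)
        fix U assume U: "U \<in> {U \<in> C. T U = Y}"
        then have "sd U U0 \<in> C" "T (sd U U0) = sd (T U) (T U0)" using assms(2,3) U0(1) by blast+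
        then show "sd U U0 \<in> {U \<in> C. T U = {}}" using U U0(2) by simp
      qed
    qed
    then show ?thesis by (simp add: bij_betw_same_card)
  qed
  have CU: "C = (\<Union>Y\<in>T ` C. {U\<in>C. T U = Y})" by blast
  have "card (\<Union>Y\<in>T ` C. {U\<in>C. T U = Y}) = (\<Sum>Y\<in>T ` C. card {U\<in>C. T U = Y})"
    by (rule card_UN_disjoint) (use assms(1) in auto)
  then have "card C = (\<Sum>Y\<in>T ` C. card {U\<in>C. T U = Y})" using CU by simp
  also have "\<dots> = (\<Sum>Y\<in>T ` C. card {U\<in>C. T U = {}})" using fib by simp
  finally show ?thesis by simp
qed

lemma minus_one_pow_card_flip:
  assumes "a + 2 * k = b + 1"
  shows "((-1::int) ^ a) = - ((-1) ^ b)"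
proof -
  have "even a \<longleftrightarrow> odd b" using assms by presburger
  then show ?thesis by (simp add: minus_one_power_iff)
qed

lemma perp_card:
  assumes "finite H" "B \<subseteq> Pow H" "{} \<in> B" "\<forall>b\<in>B. \<forall>c\<in>B. sd b c \<in> B"
  shows "card {Y\<in>Pow H. \<forall>b\<in>B. even (card (Y \<inter> b))} * card B = 2 ^ card H"
proof -
  define P where "P = {Y\<in>Pow H. \<forall>b\<in>B. even (card (Y \<inter> b))}"
  define s where "s (Y::'a set) b = ((-1::int) ^ card (Y \<inter> b))" for Y b
  have finB: "finite B" using assms(1,2) by (meson finite_Pow_iff finite_subset)
  have A: "(\<Sum>Y\<in>Pow H. s Y b) = (if b = {} then 2 ^ card H else 0)" if b: "b \<in> B" for b
  proof (cases "b = {}")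
    case True then show ?thesis using assms(1) by (simp add: s_def card_Pow)
  next
    case False
    then obtain y where y: "y \<in> b" by blast
    have yH: "y \<in> H" using y b assms(2) by blast
    have "(\<Sum>Y\<in>Pow H. s Y b) = 0"
    proof (rule sum_involution_zero[where f="\<lambda>Y. sd Y {y}"])
      show "finite (Pow H)" using assms(1) by simp
      show "\<forall>x\<in>Pow H. sd x {y} \<in> Pow H \<and> sd (sd x {y}) {y} = x"
        using yH by (auto simp: sd_def)
      show "\<forall>x\<in>Pow H. s (sd x {y}) b = - s x b"
      proof
        fix Y assume "Y \<in> Pow H"
        have fb: "finite b" using b assms(1,2) by (meson PowD finite_subset subsetD)
        have "card (b \<inter> sd Y {y}) + 2 * card (b \<inter> Y \<inter> {y}) = card (b \<inter> Y) + card (b \<inter> {y})"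
          by (rule card_sd_parity[OF fb])
        moreover have "card (b \<inter> {y}) = 1" using y by simp
        ultimately have "card (sd Y {y} \<inter> b) + 2 * card (b \<inter> Y \<inter> {y}) = card (Y \<inter> b) + 1"
          by (simp add: Int_commute)
        then show "s (sd Y {y}) b = - s Y b" unfolding s_def by (rule minus_one_pow_card_flip)
      qed
    qed
    then show ?thesis using False by simp
  qed
  have Bs: "(\<Sum>b\<in>B. s Y b) = (if Y \<in> P then int (card B) else 0)" if Y: "Y \<in> Pow H" for Y
  proof (cases "Y \<in> P")
    case True
    then have "s Y b = 1" if "b \<in> B" for b using that by (simp add: s_def P_def)
    then show ?thesis using True by simp
  next
    case False
    then obtain b0 where b0: "b0 \<in> B" "odd (card (Y \<inter> b0))" using Y by (auto simp: P_def)
    have fY: "finite Y" using Y assms(1) by (meson PowD finite_subset)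
    have "(\<Sum>b\<in>B. s Y b) = 0"
    proof (rule sum_involution_zero[where f="\<lambda>b. sd b b0"])
      show "finite B" by (rule finB)
      show "\<forall>x\<in>B. sd x b0 \<in> B \<and> sd (sd x b0) b0 = x" using assms(4) b0 by (simp add: sd_sd)
      show "\<forall>x\<in>B. s Y (sd x b0) = - s Y x"
      proof
        fix b assume "b \<in> B"
        have "card (Y \<inter> sd b b0) + 2 * card (Y \<inter> b \<inter> b0) = card (Y \<inter> b) + card (Y \<inter> b0)"
          by (rule card_sd_parity[OF fY])
        then have "even (card (Y \<inter> sd b b0)) \<longleftrightarrow> odd (card (Y \<inter> b))" using b0(2) by presburger
        then show "s Y (sd b b0) = - s Y b" by (simp add: s_def minus_one_power_iff)
      qed
    qed
    then show ?thesis using False by simp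
  qed
  have "(\<Sum>Y\<in>Pow H. \<Sum>b\<in>B. s Y b) = (\<Sum>b\<in>B. \<Sum>Y\<in>Pow H. s Y b)" by (rule sum.swap)
  also have "\<dots> = (\<Sum>b\<in>B. if b = {} then 2 ^ card H else 0)" using A by simp
  also have "\<dots> = 2 ^ card H" using finB assms(3) by (simp add: sum.delta)
  finally have L: "(\<Sum>Y\<in>Pow H. \<Sum>b\<in>B. s Y b) = 2 ^ card H" .
  have "(\<Sum>Y\<in>Pow H. \<Sum>b\<in>B. s Y b) = (\<Sum>Y\<in>Pow H. if Y \<in> P then int (card B) else 0)"
    using Bs by simp
  also have "\<dots> = (\<Sum>Y\<in>Pow H \<inter> P. int (card B))"
    using assms(1) sum.inter_restrict[of "Pow H" "\<lambda>_. int (card B)" P] by simp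
  also have "Pow H \<inter> P = P" by (auto simp: P_def)
  finally have "int (card P) * int (card B) = 2 ^ card H" using L by simp
  then have "int (card P * card B) = int (2 ^ card H)" by simp
  then show ?thesis unfolding P_def by (simp only: of_nat_eq_iff)
qed

lemma even_helper: "(a::nat) + 2 * k = b \<Longrightarrow> even b \<Longrightarrow> even a" by presburger
lemma even_helper2: "(a::nat) + 2 * k = 2 * c \<Longrightarrow> even a" by presburger

lemma count_arith:
  assumes "(p::nat) * c = 2^h" "c * 2^K = 2^V" "f * 2^K = 2^F" "V + F = h + 2*K"
  shows "p = f"
proof -
  have "p * 2^(V+K) = p * c * 2^K * 2^K" using assms(2) by (simp add: power_add mult.assoc)
  also have "\<dots> = 2^(h + 2*K)" using assms(1) by (simp add: power_add mult_2 mult.assoc)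
  finally have 1: "p * 2^(V+K) = 2^(h + 2*K)" .
  have "f * 2^(V+K) = f * 2^K * 2^V" by (simp add: power_add mult.commute mult.left_commute)
  also have "\<dots> = 2^(F+V)" using assms(3) by (simp add: power_add)
  also have "\<dots> = 2^(h + 2*K)" using assms(4) by (simp add: add.commute)
  finally have 2: "f * 2^(V+K) = 2^(h + 2*K)" .
  from 1 2 have "p * 2^(V+K) = f * 2^(V+K)" by simp
  then show ?thesis by simp
qed

locale dmap =
  fixes D :: "'d set" and \<alpha> \<sigma> :: "'d \<Rightarrow> 'd"
  assumes fin: "finite D"
    and a_in: "\<And>x. x \<in> D \<Longrightarrow> \<alpha> x \<in> D"
    and a_inv: "\<And>x. x \<in> D \<Longrightarrow> \<alpha> (\<alpha> x) = x"
    and a_fp: "\<And>x. x \<in> D \<Longrightarrow> \<alpha> x \<noteq> x"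
    and s_bij: "bij_betw \<sigma> D D"
begin

definition phi where "phi = \<sigma> \<circ> \<alpha>"

lemma s_in: "x \<in> D \<Longrightarrow> \<sigma> x \<in> D"
  using s_bij bij_betwE by blast

lemma a_bij: "bij_betw \<alpha> D D"
  by (rule bij_betw_byWitness[where f'=\<alpha>]) (use a_in a_inv in auto)

lemma phi_bij: "bij_betw phi D D"
  unfolding phi_def by (rule bij_betw_trans[OF a_bij s_bij])

definition cl where "cl f = {U. U \<subseteq> D \<and> (\<forall>x\<in>D. x \<in> U \<longleftrightarrow> f x \<in> U)}"

lemma cl_funpow:
  assumes "U \<in> cl f" "bij_betw f D D" "x \<in> D"
  shows "x \<in> U \<longleftrightarrow> (f^^k) x \<in> U"
proof (induction k)
  case 0 then show ?case by simp
next
  case (Suc k)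
  have "(f^^k) x \<in> D" using funpow_in[OF assms(2,3)] .
  then have "(f^^k) x \<in> U \<longleftrightarrow> f ((f^^k) x) \<in> U" using assms(1) unfolding cl_def by blast
  then show ?case using Suc by simp
qed

lemma cl_orbit:
  assumes "U \<in> cl f" "bij_betw f D D" "x \<in> D" "y \<in> vorbit f x"
  shows "x \<in> U \<longleftrightarrow> y \<in> U"
  using assms(4) cl_funpow[OF assms(1-3)] unfolding vorbit_iff by blast

lemma cl_card:
  assumes "bij_betw f D D"
  shows "card (cl f) = 2 ^ card (D // orbrel D f)"
proof -
  have "cl f = {U. U \<subseteq> D \<and> (\<forall>x\<in>D. \<forall>y\<in>D. (x,y) \<in> orbrel D f \<longrightarrow> (x\<in>U \<longleftrightarrow> y\<in>U))}"
    unfolding cl_def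
  proof (intro Collect_cong conj_cong refl iffI)
    fix U assume U: "U \<subseteq> D" and H: "\<forall>x\<in>D. x \<in> U \<longleftrightarrow> f x \<in> U"
    then have "U \<in> cl f" unfolding cl_def by blast
    then show "\<forall>x\<in>D. \<forall>y\<in>D. (x,y) \<in> orbrel D f \<longrightarrow> (x\<in>U \<longleftrightarrow> y\<in>U)"
      using cl_orbit[OF _ assms] unfolding orbrel_def by blast
  next
    fix U assume U: "U \<subseteq> D" and H: "\<forall>x\<in>D. \<forall>y\<in>D. (x,y) \<in> orbrel D f \<longrightarrow> (x\<in>U \<longleftrightarrow> y\<in>U)"
    show "\<forall>x\<in>D. x \<in> U \<longleftrightarrow> f x \<in> U"
    proof
      fix x assume x: "x \<in> D"
      have "f x \<in> D" using x assms bij_betwE by blast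
      moreover have "(x, f x) \<in> orbrel D f" using x unfolding orbrel_def by simp
      ultimately show "x \<in> U \<longleftrightarrow> f x \<in> U" using H x by blast
    qed
  qed
  then show ?thesis using quot_set_card[OF fin orbrel_equiv[OF fin assms]] by simp
qed

definition Kset where "Kset = {(d, \<sigma> d) | d. d \<in> D} \<union> {(d, \<alpha> d) | d. d \<in> D}"

definition cl2 where "cl2 = {U. U \<subseteq> D \<and> (\<forall>x\<in>D. (x \<in> U \<longleftrightarrow> \<sigma> x \<in> U) \<and> (x \<in> U \<longleftrightarrow> \<alpha> x \<in> U))}"

lemma cl2_card: "card cl2 = 2 ^ card (D // conn Kset)"
proof -
  have sub: "Kset \<subseteq> D \<times> D" unfolding Kset_def using s_in a_in by auto
  have "cl2 = {U. U \<subseteq> D \<and> (\<forall>(x,y)\<in>Kset. x\<in>U \<longleftrightarrow> y\<in>U)}"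
    unfolding cl2_def Kset_def by blast
  then show ?thesis using conn_set_card[OF fin sub] by simp
qed

definition H where "H = (SOME H. H \<subseteq> D \<and> H \<inter> \<alpha> ` H = {} \<and> H \<union> \<alpha> ` H = D)"

lemma H_props: "H \<subseteq> D" "H \<inter> \<alpha> ` H = {}" "H \<union> \<alpha> ` H = D"
proof -
  have "\<exists>H. H \<subseteq> D \<and> H \<inter> \<alpha> ` H = {} \<and> H \<union> \<alpha> ` H = D"
    by (rule half_exists[OF fin]) (use a_in a_inv a_fp in auto)
  then have "H \<subseteq> D \<and> H \<inter> \<alpha> ` H = {} \<and> H \<union> \<alpha> ` H = D"
    unfolding H_def by (rule someI_ex)
  then show "H \<subseteq> D" "H \<inter> \<alpha> ` H = {}" "H \<union> \<alpha> ` H = D" by auto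
qed

lemma H_fin: "finite H" using H_props(1) fin finite_subset by blast

lemma card_D_H: "card D = 2 * card H"
proof -
  have inj: "inj_on \<alpha> H" using H_props(1) a_inv by (metis inj_onI subsetD)
  have "card D = card H + card (\<alpha> ` H)"
    using H_props H_fin by (metis card_Un_disjoint finite_imageI)
  then show ?thesis using card_image[OF inj] by simp
qed

lemma D_cases:
  assumes "x \<in> D"
  obtains "x \<in> H" | y where "y \<in> H" "x = \<alpha> y"
  using assms H_props(3) by blast

definition Tm where "Tm U = {x\<in>H. (x \<in> U) \<noteq> (\<alpha> x \<in> U)}"

lemma Tm_sd: "Tm (sd U V) = sd (Tm U) (Tm V)"
  unfolding Tm_def sd_def by auto

lemma Tm_empty_iff: "Tm U = {} \<longleftrightarrow> (\<forall>x\<in>D. x \<in> U \<longleftrightarrow> \<alpha> x \<in> U)"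
proof
  assume A: "Tm U = {}"
  show "\<forall>x\<in>D. x \<in> U \<longleftrightarrow> \<alpha> x \<in> U"
  proof
    fix x assume x: "x \<in> D"
    then show "x \<in> U \<longleftrightarrow> \<alpha> x \<in> U"
    proof (cases rule: D_cases)
      case 1 then show ?thesis using A unfolding Tm_def by blast
    next
      case (2 y)
      then have "y \<in> U \<longleftrightarrow> \<alpha> y \<in> U" using A unfolding Tm_def by blast
      moreover have "\<alpha> x = y" using 2 a_inv H_props(1) by blast
      ultimately show ?thesis using 2 by metis
    qed
  qed
next
  assume "\<forall>x\<in>D. x \<in> U \<longleftrightarrow> \<alpha> x \<in> U"
  then show "Tm U = {}" unfolding Tm_def using H_props(1) by blast
qed

lemma cl_sd: "U \<in> cl f \<Longrightarrow> V \<in> cl f \<Longrightarrow> sd U V \<in> cl f"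
  unfolding cl_def sd_def by blast

lemma cl_empty: "{} \<in> cl f" unfolding cl_def by blast

lemma cl_fin: "finite (cl f)"
proof -
  have "cl f \<subseteq> Pow D" unfolding cl_def by blast
  then show ?thesis using fin by (meson finite_Pow_iff finite_subset)
qed

lemma ker_s: "{U\<in>cl \<sigma>. Tm U = {}} = cl2"
  unfolding Tm_empty_iff cl_def cl2_def by blast

lemma ker_phi: "{U\<in>cl phi. Tm U = {}} = cl2"
proof -
  have iff: "(\<forall>x\<in>D. x \<in> U \<longleftrightarrow> phi x \<in> U) \<and> (\<forall>x\<in>D. x \<in> U \<longleftrightarrow> \<alpha> x \<in> U) \<longleftrightarrow>
        (\<forall>x\<in>D. (x \<in> U \<longleftrightarrow> \<sigma> x \<in> U) \<and> (x \<in> U \<longleftrightarrow> \<alpha> x \<in> U))" for U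
  proof
    assume A: "(\<forall>x\<in>D. x \<in> U \<longleftrightarrow> phi x \<in> U) \<and> (\<forall>x\<in>D. x \<in> U \<longleftrightarrow> \<alpha> x \<in> U)"
    then have A1: "\<forall>x\<in>D. x \<in> U \<longleftrightarrow> phi x \<in> U" and A2: "\<forall>x\<in>D. x \<in> U \<longleftrightarrow> \<alpha> x \<in> U"
      by (rule conjunct1, rule conjunct2)
    show "\<forall>x\<in>D. (x \<in> U \<longleftrightarrow> \<sigma> x \<in> U) \<and> (x \<in> U \<longleftrightarrow> \<alpha> x \<in> U)"
    proof
      fix x assume x: "x \<in> D"
      have e1: "\<alpha> x \<in> U \<longleftrightarrow> phi (\<alpha> x) \<in> U" using bspec[OF A1 a_in[OF x]] .
      have e2: "phi (\<alpha> x) = \<sigma> x" unfolding phi_def using a_inv[OF x] by simp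
      have e3: "x \<in> U \<longleftrightarrow> \<alpha> x \<in> U" using bspec[OF A2 x] .
      show "(x \<in> U \<longleftrightarrow> \<sigma> x \<in> U) \<and> (x \<in> U \<longleftrightarrow> \<alpha> x \<in> U)"
        using e1 e2 e3 by simp
    qed
  next
    assume A: "\<forall>x\<in>D. (x \<in> U \<longleftrightarrow> \<sigma> x \<in> U) \<and> (x \<in> U \<longleftrightarrow> \<alpha> x \<in> U)"
    show "(\<forall>x\<in>D. x \<in> U \<longleftrightarrow> phi x \<in> U) \<and> (\<forall>x\<in>D. x \<in> U \<longleftrightarrow> \<alpha> x \<in> U)"
    proof (intro conjI ballI)
      fix x assume x: "x \<in> D"
      have e1: "\<alpha> x \<in> U \<longleftrightarrow> \<sigma> (\<alpha> x) \<in> U" using bspec[OF A a_in[OF x]] by (rule conjunct1)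
      have e3: "x \<in> U \<longleftrightarrow> \<alpha> x \<in> U" using bspec[OF A x] by (rule conjunct2)
      show "x \<in> U \<longleftrightarrow> phi x \<in> U" using e1 e3 unfolding phi_def by simp
    next
      fix x assume x: "x \<in> D"
      show "x \<in> U \<longleftrightarrow> \<alpha> x \<in> U" using bspec[OF A x] by (rule conjunct2)
    qed
  qed
  show ?thesis
  proof (rule set_eqI)
    fix U show "U \<in> {U\<in>cl phi. Tm U = {}} \<longleftrightarrow> U \<in> cl2"
      unfolding cl_def cl2_def Tm_empty_iff mem_Collect_eq using iff[of U] by (simp only: conj_assoc)
  qed
qed

lemma img_cl_card:
  assumes "bij_betw f D D" "{U\<in>cl f. Tm U = {}} = cl2"
  shows "card (Tm ` cl f) * 2 ^ card (D // conn Kset) = 2 ^ card (D // orbrel D f)"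
proof -
  have "card (Tm ` cl f) * card {U\<in>cl f. Tm U = {}} = card (cl f)"
    by (rule img_ker_card[OF cl_fin]) (auto simp: cl_sd Tm_sd)
  then show ?thesis using assms(2) cl2_card cl_card[OF assms(1)] by simp
qed

lemma cl_vorbit:
  assumes "U \<in> cl \<sigma>" "x \<in> U"
  shows "vorbit \<sigma> x \<subseteq> U"
proof -
  have "x \<in> D" using assms unfolding cl_def by blast
  then show ?thesis using cl_orbit[OF assms(1) s_bij] assms(2) by blast
qed

definition Zs where "Zs = {Y \<in> Pow H. \<forall>x\<in>D. even (card ((Y \<union> \<alpha> ` Y) \<inter> vorbit \<sigma> x))}"
definition Ps where "Ps = {Y \<in> Pow H. \<forall>b\<in>Tm ` cl \<sigma>. even (card (Y \<inter> b))}"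

lemma Z_sub_P: "Zs \<subseteq> Ps"
proof
  fix Y assume Y: "Y \<in> Zs"
  then have YH: "Y \<subseteq> H" and ev: "\<forall>x\<in>D. even (card ((Y \<union> \<alpha> ` Y) \<inter> vorbit \<sigma> x))"
    unfolding Zs_def by auto
  have fY: "finite Y" using YH H_fin finite_subset by blast
  have "even (card (Y \<inter> Tm U))" if U: "U \<in> cl \<sigma>" for U
  proof -
    have UD: "U \<subseteq> D" using U unfolding cl_def by blast
    have e1: "Y \<inter> Tm U = {x\<in>Y. (x \<in> U) \<noteq> (\<alpha> x \<in> U)}" using YH unfolding Tm_def by blast
    obtain k where k: "card {x\<in>Y. (x \<in> U) \<noteq> (\<alpha> x \<in> U)} + 2 * k =
        card {x\<in>Y. x \<in> U} + card {x\<in>Y. \<alpha> x \<in> U}"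
      using card_xor[OF fY, of "\<lambda>x. x \<in> U" "\<lambda>x. \<alpha> x \<in> U"] by blast
    have inj: "inj_on \<alpha> Y"
    proof (rule inj_onI)
      fix a b assume "a \<in> Y" "b \<in> Y" "\<alpha> a = \<alpha> b"
      then show "a = b" using YH H_props(1) a_inv by (metis subsetD)
    qed
    have "\<alpha> ` {x\<in>Y. \<alpha> x \<in> U} = \<alpha> ` Y \<inter> U" by blast
    moreover have "inj_on \<alpha> {x\<in>Y. \<alpha> x \<in> U}" using inj by (rule inj_on_subset) blast
    ultimately have c2: "card {x\<in>Y. \<alpha> x \<in> U} = card (\<alpha> ` Y \<inter> U)" by (metis card_image)
    have c1: "{x\<in>Y. x \<in> U} = Y \<inter> U" by blast
    have disj: "(Y \<inter> U) \<inter> (\<alpha> ` Y \<inter> U) = {}" using YH H_props(2) by blast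
    have c3: "card (Y \<inter> U) + card (\<alpha> ` Y \<inter> U) = card ((Y \<union> \<alpha> ` Y) \<inter> U)"
    proof -
      have "(Y \<union> \<alpha> ` Y) \<inter> U = (Y \<inter> U) \<union> (\<alpha> ` Y \<inter> U)" by blast
      then show ?thesis using card_Un_disjoint[OF _ _ disj] fY by simp
    qed
    let ?Yh = "Y \<union> \<alpha> ` Y"
    let ?Os = "vorbit \<sigma> ` U"
    have Ueq: "?Yh \<inter> U = (\<Union>Ob\<in>?Os. ?Yh \<inter> Ob)"
    proof
      show "?Yh \<inter> U \<subseteq> (\<Union>Ob\<in>?Os. ?Yh \<inter> Ob)"
      proof
        fix z assume "z \<in> ?Yh \<inter> U"
        then show "z \<in> (\<Union>Ob\<in>?Os. ?Yh \<inter> Ob)" using vorbit_self[of z \<sigma>] by blast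
      qed
      show "(\<Union>Ob\<in>?Os. ?Yh \<inter> Ob) \<subseteq> ?Yh \<inter> U" using cl_vorbit[OF U] by blast
    qed
    have finU: "finite U" using UD fin finite_subset by blast
    have "card (\<Union>Ob\<in>?Os. ?Yh \<inter> Ob) = (\<Sum>Ob\<in>?Os. card (?Yh \<inter> Ob))"
    proof (rule card_UN_disjoint)
      show "finite ?Os" using finU by simp
      show "\<forall>Ob\<in>?Os. finite (?Yh \<inter> Ob)" using fY by blast
      show "\<forall>O1\<in>?Os. \<forall>O2\<in>?Os. O1 \<noteq> O2 \<longrightarrow> (?Yh \<inter> O1) \<inter> (?Yh \<inter> O2) = {}"
      proof (intro ballI impI)
        fix O1 O2 assume "O1 \<in> ?Os" "O2 \<in> ?Os" "O1 \<noteq> O2"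
        then obtain x1 x2 where "x1 \<in> D" "x2 \<in> D" "O1 = vorbit \<sigma> x1" "O2 = vorbit \<sigma> x2"
          using UD by blast
        then have "O1 \<inter> O2 = {}"
          using vorbit_disj[OF fin s_bij, of x1 x2] \<open>O1 \<noteq> O2\<close> by simp
        then show "(?Yh \<inter> O1) \<inter> (?Yh \<inter> O2) = {}" by blast
      qed
    qed
    moreover have "even (\<Sum>Ob\<in>?Os. card (?Yh \<inter> Ob))"
    proof (rule dvd_sum)
      fix Ob assume "Ob \<in> ?Os"
      then obtain x where "x \<in> D" "Ob = vorbit \<sigma> x" using UD by blast
      then show "2 dvd card (?Yh \<inter> Ob)" using ev by blast
    qed
    ultimately have ev2: "even (card (?Yh \<inter> U))" using Ueq by simp
    have "card (Y \<inter> Tm U) + 2 * k = card (?Yh \<inter> U)" using e1 k c1 c2 c3 by simp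
    then show ?thesis using ev2 by (rule even_helper)
  qed
  then show "Y \<in> Ps" unfolding Ps_def using YH by blast
qed

lemma Bface_sub_Z: "Tm ` cl phi \<subseteq> Zs"
proof
  fix Y assume "Y \<in> Tm ` cl phi"
  then obtain U where U: "U \<in> cl phi" "Y = Tm U" by blast
  have UD: "U \<subseteq> D" and Uc: "\<forall>x\<in>D. x \<in> U \<longleftrightarrow> phi x \<in> U" using U(1) unfolding cl_def by auto
  have YH: "Y \<subseteq> H" using U(2) unfolding Tm_def by blast
  have Yh: "Y \<union> \<alpha> ` Y = {x\<in>D. (x \<in> U) \<noteq> (\<alpha> x \<in> U)}"
  proof
    show "Y \<union> \<alpha> ` Y \<subseteq> {x\<in>D. (x \<in> U) \<noteq> (\<alpha> x \<in> U)}"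
    proof
      fix x assume "x \<in> Y \<union> \<alpha> ` Y"
      then consider "x \<in> Y" | y where "y \<in> Y" "x = \<alpha> y" by blast
      then show "x \<in> {x\<in>D. (x \<in> U) \<noteq> (\<alpha> x \<in> U)}"
      proof cases
        case 1
        then have "x \<in> H" "(x \<in> U) \<noteq> (\<alpha> x \<in> U)" using U(2) unfolding Tm_def by auto
        then show ?thesis using H_props(1) by auto
      next
        case (2 y)
        then have yH: "y \<in> H" and yx: "(y \<in> U) \<noteq> (\<alpha> y \<in> U)" using U(2) unfolding Tm_def by auto
        then have yD: "y \<in> D" using H_props(1) by auto
        have ax: "\<alpha> x = y" using 2 a_inv[OF yD] by simp
        have xD: "x \<in> D" using 2 a_in[OF yD] by simp
        have "(x \<in> U) \<noteq> (\<alpha> x \<in> U)" unfolding ax using yx 2(2) by simp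
        then show ?thesis using xD by simp
      qed
    qed
    show "{x\<in>D. (x \<in> U) \<noteq> (\<alpha> x \<in> U)} \<subseteq> Y \<union> \<alpha> ` Y"
    proof
      fix x assume x: "x \<in> {x\<in>D. (x \<in> U) \<noteq> (\<alpha> x \<in> U)}"
      then have xD: "x \<in> D" and xx: "(x \<in> U) \<noteq> (\<alpha> x \<in> U)" by auto
      from xD show "x \<in> Y \<union> \<alpha> ` Y"
      proof (cases rule: D_cases)
        case 1 then have "x \<in> Tm U" using xx unfolding Tm_def by simp
        then show ?thesis using U(2) by simp
      next
        case (2 y)
        have yD: "y \<in> D" using 2(1) H_props(1) by auto
        have ax: "\<alpha> x = y" using 2(2) a_inv[OF yD] by simp
        have "(y \<in> U) \<noteq> (\<alpha> y \<in> U)" using xx ax 2(2) by auto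
        then have "y \<in> Tm U" using 2(1) unfolding Tm_def by simp
        then have "y \<in> Y" using U(2) by simp
        then show ?thesis using 2(2) by simp
      qed
    qed
  qed
  have "even (card ((Y \<union> \<alpha> ` Y) \<inter> vorbit \<sigma> x))" if x: "x \<in> D" for x
  proof -
    let ?O = "vorbit \<sigma> x"
    have OD: "?O \<subseteq> D" using vorbit_subset[OF s_bij x] .
    have fO: "finite ?O" using finite_subset[OF OD fin] .
    have e1: "(Y \<union> \<alpha> ` Y) \<inter> ?O = {y\<in>?O. (y \<in> U) \<noteq> (\<alpha> y \<in> U)}" unfolding Yh using OD by blast
    obtain k where k: "card {y\<in>?O. (y \<in> U) \<noteq> (\<alpha> y \<in> U)} + 2 * k =
        card {y\<in>?O. y \<in> U} + card {y\<in>?O. \<alpha> y \<in> U}"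
      using card_xor[OF fO, of "\<lambda>x. x \<in> U" "\<lambda>x. \<alpha> x \<in> U"] by blast
    have as: "\<alpha> y \<in> U \<longleftrightarrow> \<sigma> y \<in> U" if "y \<in> D" for y
    proof -
      have "\<alpha> y \<in> U \<longleftrightarrow> phi (\<alpha> y) \<in> U" using Uc a_in[OF that] by blast
      moreover have "phi (\<alpha> y) = \<sigma> y" unfolding phi_def using a_inv[OF that] by simp
      ultimately show ?thesis by simp
    qed
    have c2: "{y\<in>?O. \<alpha> y \<in> U} = {y\<in>?O. \<sigma> y \<in> U}"
    proof (rule Collect_cong)
      fix y show "(y \<in> ?O \<and> \<alpha> y \<in> U) \<longleftrightarrow> (y \<in> ?O \<and> \<sigma> y \<in> U)"
        using as[of y] OD by blast
    qed
    have injs: "inj_on \<sigma> ?O" using inj_on_subset[OF bij_betw_imp_inj_on[OF s_bij] OD] .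
    have im: "\<sigma> ` {y\<in>?O. \<sigma> y \<in> U} = ?O \<inter> U"
    proof
      show "\<sigma> ` {y\<in>?O. \<sigma> y \<in> U} \<subseteq> ?O \<inter> U"
      proof (rule image_subsetI)
        fix y assume "y \<in> {y\<in>?O. \<sigma> y \<in> U}"
        then show "\<sigma> y \<in> ?O \<inter> U" using vorbit_step[of y \<sigma> x] by blast
      qed
      show "?O \<inter> U \<subseteq> \<sigma> ` {y\<in>?O. \<sigma> y \<in> U}"
      proof
        fix z assume z: "z \<in> ?O \<inter> U"
        then obtain y where "y \<in> ?O" "\<sigma> y = z" using vorbit_pred[OF fin s_bij x] by blast
        then show "z \<in> \<sigma> ` {y\<in>?O. \<sigma> y \<in> U}" using z by blast
      qed
    qed
    have inj2: "inj_on \<sigma> {y\<in>?O. \<sigma> y \<in> U}" using injs by (rule inj_on_subset) blast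
    have "card {y\<in>?O. \<sigma> y \<in> U} = card (?O \<inter> U)"
      using card_image[OF inj2] im by simp
    moreover have "{y\<in>?O. y \<in> U} = ?O \<inter> U" by blast
    ultimately have "card {y\<in>?O. (y \<in> U) \<noteq> (\<alpha> y \<in> U)} + 2 * k = 2 * card (?O \<inter> U)"
      using k c2 by simp
    then have "card ((Y \<union> \<alpha> ` Y) \<inter> vorbit \<sigma> x) + 2 * k = 2 * card (?O \<inter> U)" using e1 by simp
    then show ?thesis by (rule even_helper2)
  qed
  then show "Y \<in> Zs" unfolding Zs_def using YH by blast
qed

lemma Z_eq_Bface:
  assumes euler: "2 * int (card (D // orbrel D \<sigma>)) - int (card D)
       + 2 * int (card (D // orbrel D phi)) = 4 * int (card (D // conn Kset))"
  shows "Zs = Tm ` cl phi"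
proof -
  let ?V = "card (D // orbrel D \<sigma>)" and ?F = "card (D // orbrel D phi)"
    and ?K = "card (D // conn Kset)" and ?h = "card H"
  have cut: "card (Tm ` cl \<sigma>) * 2 ^ ?K = 2 ^ ?V"
    by (rule img_cl_card[OF s_bij ker_s])
  have face: "card (Tm ` cl phi) * 2 ^ ?K = 2 ^ ?F"
    by (rule img_cl_card[OF phi_bij ker_phi])
  have perp: "card Ps * card (Tm ` cl \<sigma>) = 2 ^ ?h"
    unfolding Ps_def
  proof (rule perp_card[OF H_fin])
    show "Tm ` cl \<sigma> \<subseteq> Pow H" unfolding Tm_def by blast
    have "Tm {} = {}" unfolding Tm_def by simp
    then show "{} \<in> Tm ` cl \<sigma>" using cl_empty[of \<sigma>] by (metis image_eqI)
    show "\<forall>b\<in>Tm ` cl \<sigma>. \<forall>c\<in>Tm ` cl \<sigma>. sd b c \<in> Tm ` cl \<sigma>"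
    proof (intro ballI)
      fix b c assume "b \<in> Tm ` cl \<sigma>" "c \<in> Tm ` cl \<sigma>"
      then obtain U V where "U \<in> cl \<sigma>" "V \<in> cl \<sigma>" "b = Tm U" "c = Tm V" by blast
      then have "sd b c = Tm (sd U V)" "sd U V \<in> cl \<sigma>" using Tm_sd cl_sd by auto
      then show "sd b c \<in> Tm ` cl \<sigma>" by blast
    qed
  qed
  have eu: "?V + ?F = ?h + 2 * ?K"
  proof -
    have "int (card D) = 2 * int ?h" using card_D_H by simp
    then show ?thesis using euler by linarith
  qed
  have "card Ps = card (Tm ` cl phi)" by (rule count_arith[OF perp cut face eu])
  moreover have "Tm ` cl phi \<subseteq> Ps" using Bface_sub_Z Z_sub_P by (rule subset_trans)
  moreover have "finite Ps" unfolding Ps_def using H_fin by simp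
  ultimately have "Tm ` cl phi = Ps" using card_subset_eq by metis
  then have "Zs \<subseteq> Tm ` cl phi" using Z_sub_P by simp
  then show ?thesis using Bface_sub_Z by (rule subset_antisym)
qed

lemma planar_cocycle:
  assumes euler: "2 * int (card (D // orbrel D \<sigma>)) - int (card D)
       + 2 * int (card (D // orbrel D phi)) = 4 * int (card (D // conn Kset))"
    and W: "W \<subseteq> D" "\<forall>x\<in>D. x \<in> W \<longleftrightarrow> \<alpha> x \<in> W" "\<forall>x\<in>D. even (card (W \<inter> vorbit \<sigma> x))"
  shows "\<exists>U. U \<subseteq> D \<and> (\<forall>x\<in>D. x \<in> U \<longleftrightarrow> \<sigma> (\<alpha> x) \<in> U) \<and> (\<forall>x\<in>D. x \<in> W \<longleftrightarrow> (x \<in> U) \<noteq> (\<alpha> x \<in> U))"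
proof -
  let ?Y = "W \<inter> H"
  have Yh: "?Y \<union> \<alpha> ` ?Y = W"
  proof
    show "?Y \<union> \<alpha> ` ?Y \<subseteq> W" using W(1,2) H_props(1) by blast
    show "W \<subseteq> ?Y \<union> \<alpha> ` ?Y"
    proof
      fix x assume xW: "x \<in> W"
      then have xD: "x \<in> D" using W(1) by blast
      then show "x \<in> ?Y \<union> \<alpha> ` ?Y"
      proof (cases rule: D_cases)
        case 1 then show ?thesis using xW by blast
      next
        case (2 y)
        then have "y \<in> D" "\<alpha> y = x" using H_props(1) by auto
        then have "y \<in> W" using W(2) xW by (metis a_inv)
        then show ?thesis using 2 by blast
      qed
    qed
  qed
  have "?Y \<in> Zs" unfolding Zs_def using Yh W(3) by auto
  then have "?Y \<in> Tm ` cl phi" using Z_eq_Bface[OF euler] by simp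
  then obtain U where U: "U \<in> cl phi" "?Y = Tm U" by blast
  have UD: "U \<subseteq> D" and Uc: "\<forall>x\<in>D. x \<in> U \<longleftrightarrow> \<sigma> (\<alpha> x) \<in> U"
    using U(1) unfolding cl_def phi_def by auto
  have "x \<in> W \<longleftrightarrow> (x \<in> U) \<noteq> (\<alpha> x \<in> U)" if xD: "x \<in> D" for x
    using xD
  proof (cases rule: D_cases)
    case 1
    then have "x \<in> W \<longleftrightarrow> x \<in> Tm U" using U(2) by blast
    then show ?thesis using 1 unfolding Tm_def by blast
  next
    case (2 y)
    have yD: "y \<in> D" using 2 H_props(1) by blast
    have ax: "\<alpha> x = y" using 2 a_inv yD by simp
    have "x \<in> W \<longleftrightarrow> y \<in> W" using W(2) xD ax by metis
    also have "\<dots> \<longleftrightarrow> y \<in> Tm U" using U(2) 2 by blast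
    also have "\<dots> \<longleftrightarrow> (y \<in> U) \<noteq> (\<alpha> y \<in> U)" using 2 unfolding Tm_def by blast
    finally show ?thesis using ax 2 by metis
  qed
  then show ?thesis using UD Uc by blast
qed

end

lemma bit_ob_xor: "of_bool P + of_bool Q = (of_bool (P \<noteq> Q) :: bit)"
  by (cases P; cases Q) simp_all

lemma bit_cross:
  assumes "(p0 \<noteq> p1) = E1" "(p1 \<noteq> p2) = E2" "(p2 \<noteq> p3) = E1" "(p3 \<noteq> p0) = E2"
    "\<not>(G1 \<and> E1)" "\<not>(G2 \<and> E2)"
  shows "of_bool (G1 \<and> p1) + of_bool (G2 \<and> p2) + of_bool (G1 \<and> p3) + of_bool (G2 \<and> p0)
     = (of_bool (G1 \<and> E2) + of_bool (G2 \<and> E1) :: bit)"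
  using assms by (cases p0; cases p1; cases p2; cases p3; cases G1; cases G2) simp_all

lemma bit_edge1:
  assumes "(p1 \<noteq> p2) = Ea" "(p2 \<noteq> p0) = Eb" "(p0 \<noteq> q0) = (Ea \<noteq> Eb)"
    "(q1 \<noteq> q2) = Ea" "(q2 \<noteq> q0) = Eb"
    "\<not>(Ga \<and> Ea)" "\<not>(Gb \<and> Eb)"
  shows "of_bool (Ga \<and> p2) + of_bool (Gb \<and> p0) + of_bool (Ga \<and> q2) + of_bool (Gb \<and> q0)
     = (of_bool (Ga \<and> Eb) + of_bool (Gb \<and> Ea) :: bit)"
  using assms by (cases p0; cases q0; cases p2; cases q2; cases Ga; cases Gb) simp_all

lemma bit_edge0:
  assumes "(p1 \<noteq> p2) = Ea" "(p2 \<noteq> p0) = Eb" "(p0 \<noteq> q0) = (Ea \<noteq> Eb)"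
    "(q1 \<noteq> q2) = Eb" "(q2 \<noteq> q0) = Ea"
    "\<not>(Ga \<and> Ea)" "\<not>(Gb \<and> Eb)"
  shows "of_bool (Ga \<and> p2) + of_bool (Gb \<and> p0) + of_bool (Gb \<and> q2) + of_bool (Ga \<and> q0)
     = (0 :: bit)"
  using assms by (cases p0; cases q0; cases p2; cases q2; cases Ga; cases Gb) simp_all

lemma bit_of_nat_even: "(of_nat n :: bit) = 0 \<longleftrightarrow> even n"
proof (induction n)
  case 0 then show ?case by simp
next
  case (Suc n)
  have "(of_nat (Suc n) :: bit) = 1 + of_nat n" by simp
  then show ?case using Suc by (cases "(of_nat n :: bit)") auto
qed

lemma bit_sum_card: "finite A \<Longrightarrow> (\<Sum>a\<in>A. of_bool (P a) :: bit) = of_nat (card {a\<in>A. P a})"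
proof -
  assume fA: "finite A"
  have "(\<Sum>a\<in>A. of_bool (P a) :: bit) = (\<Sum>a\<in>A. if P a then 1 else 0)" by (simp add: of_bool_def)
  also have "\<dots> = (\<Sum>a\<in>{a\<in>A. P a}. 1)" using sum.inter_filter[OF fA, of "\<lambda>_. (1::bit)" P] by simp
  also have "\<dots> = of_nat (card {a\<in>A. P a})" by simp
  finally show ?thesis .
qed

lemma sum_gt_delta:
  assumes "finite I" "(b::nat) \<in> I"
  shows "(\<Sum>i\<in>I. of_bool (a > i \<and> b = i) :: bit) = of_bool (b < a)"
proof -
  have "(\<Sum>i\<in>I. of_bool (a > i \<and> b = i) :: bit) = (\<Sum>i\<in>I. if b = i then of_bool (a > i) else 0)"
    by (rule sum.cong) auto
  also have "\<dots> = of_bool (b < a)" using assms by (simp add: sum.delta)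
  finally show ?thesis .
qed

locale pmd =
  fixes D :: "'d set" and \<alpha> \<sigma> :: "'d \<Rightarrow> 'd" and Mt :: "'d set"
  assumes pm: "pm_diagram D \<alpha> \<sigma> Mt"
begin

lemma pmf:
  "finite D" "\<And>x. x \<in> D \<Longrightarrow> \<alpha> x \<in> D" "\<And>x. x \<in> D \<Longrightarrow> \<alpha> (\<alpha> x) = x"
  "\<And>x. x \<in> D \<Longrightarrow> \<alpha> x \<noteq> x" "bij_betw \<sigma> D D"
  using pm unfolding pm_diagram_def by auto

sublocale dmap D \<alpha> \<sigma>
  by (unfold_locales) (use pmf in auto)

lemma orb34: "d \<in> D \<Longrightarrow> card (vorbit \<sigma> d) = 3 \<or> card (vorbit \<sigma> d) = 4"
  using pm unfolding pm_diagram_def by blast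
lemma Mt_sub: "Mt \<subseteq> D"
  using pm unfolding pm_diagram_def by blast
lemma Mt_D: "m \<in> Mt \<Longrightarrow> m \<in> D"
  using Mt_sub by blast
lemma Mt_a: "m \<in> Mt \<Longrightarrow> \<alpha> m \<in> Mt"
  using pm unfolding pm_diagram_def by blast
lemma Mt_3: "m \<in> Mt \<Longrightarrow> card (vorbit \<sigma> m) = 3"
  using pm unfolding pm_diagram_def by blast
lemma Mt_na: "m \<in> Mt \<Longrightarrow> \<alpha> m \<notin> vorbit \<sigma> m"
  using pm unfolding pm_diagram_def by blast
lemma one_Mt: "d \<in> D \<Longrightarrow> card (vorbit \<sigma> d) = 3 \<Longrightarrow> card (vorbit \<sigma> d \<inter> Mt) = 1"
  using pm unfolding pm_diagram_def by blast
lemma euler: "2 * int (card (D // orbrel D \<sigma>)) - int (card D)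
       + 2 * int (card (D // orbrel D phi)) = 4 * int (card (D // conn Kset))"
  using pm unfolding pm_diagram_def phi_def Kset_def by blast

lemma orb3:
  assumes "x \<in> D" "card (vorbit \<sigma> x) = 3"
  shows "\<sigma> (\<sigma> (\<sigma> x)) = x" "x \<noteq> \<sigma> x" "x \<noteq> \<sigma> (\<sigma> x)" "\<sigma> x \<noteq> \<sigma> (\<sigma> x)"
    "vorbit \<sigma> x = {x, \<sigma> x, \<sigma> (\<sigma> x)}"
proof -
  have c: "(\<sigma>^^3) x = x" "vorbit \<sigma> x = (\<lambda>i. (\<sigma>^^i) x) ` {..<3}"
    "inj_on (\<lambda>i. (\<sigma>^^i) x) {..<3}"
    using vorbit_card[OF fin s_bij assms] by auto
  show "\<sigma> (\<sigma> (\<sigma> x)) = x" using c(1) by (simp add: numeral_3_eq_3)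
  have l: "{..<3::nat} = {0, 1, 2}" by auto
  show "vorbit \<sigma> x = {x, \<sigma> x, \<sigma> (\<sigma> x)}" using c(2) unfolding l by (simp add: numeral_2_eq_2)
  have d: "(\<sigma>^^i) x \<noteq> (\<sigma>^^j) x" if "i < 3" "j < 3" "i \<noteq> j" for i j
    using c(3) that by (meson inj_onD lessThan_iff)
  show "x \<noteq> \<sigma> x" using d[of 0 1] by simp
  show "x \<noteq> \<sigma> (\<sigma> x)" using d[of 0 2] by (simp add: numeral_2_eq_2)
  show "\<sigma> x \<noteq> \<sigma> (\<sigma> x)" using d[of 1 2] by (simp add: numeral_2_eq_2)
qed

lemma orb4:
  assumes "x \<in> D" "card (vorbit \<sigma> x) = 4"
  shows "\<sigma> (\<sigma> (\<sigma> (\<sigma> x))) = x" "x \<noteq> \<sigma> x" "x \<noteq> \<sigma> (\<sigma> x)" "x \<noteq> \<sigma> (\<sigma> (\<sigma> x))"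
    "\<sigma> x \<noteq> \<sigma> (\<sigma> x)" "\<sigma> x \<noteq> \<sigma> (\<sigma> (\<sigma> x))" "\<sigma> (\<sigma> x) \<noteq> \<sigma> (\<sigma> (\<sigma> x))"
    "vorbit \<sigma> x = {x, \<sigma> x, \<sigma> (\<sigma> x), \<sigma> (\<sigma> (\<sigma> x))}"
proof -
  have c: "(\<sigma>^^4) x = x" "vorbit \<sigma> x = (\<lambda>i. (\<sigma>^^i) x) ` {..<4}"
    "inj_on (\<lambda>i. (\<sigma>^^i) x) {..<4}"
    using vorbit_card[OF fin s_bij assms] by auto
  have n4: "(4::nat) = Suc (Suc (Suc (Suc 0)))" by simp
  show "\<sigma> (\<sigma> (\<sigma> (\<sigma> x))) = x" using c(1) unfolding n4 by simp
  have l: "{..<4::nat} = {0, 1, 2, 3}" by auto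
  show "vorbit \<sigma> x = {x, \<sigma> x, \<sigma> (\<sigma> x), \<sigma> (\<sigma> (\<sigma> x))}"
    using c(2) unfolding l by (simp add: numeral_2_eq_2 numeral_3_eq_3)
  have d: "(\<sigma>^^i) x \<noteq> (\<sigma>^^j) x" if "i < 4" "j < 4" "i \<noteq> j" for i j
    using c(3) that by (meson inj_onD lessThan_iff)
  show "x \<noteq> \<sigma> x" using d[of 0 1] by simp
  show "x \<noteq> \<sigma> (\<sigma> x)" using d[of 0 2] by (simp add: numeral_2_eq_2)
  show "x \<noteq> \<sigma> (\<sigma> (\<sigma> x))" using d[of 0 3] by (simp add: numeral_3_eq_3)
  show "\<sigma> x \<noteq> \<sigma> (\<sigma> x)" using d[of 1 2] by (simp add: numeral_2_eq_2)
  show "\<sigma> x \<noteq> \<sigma> (\<sigma> (\<sigma> x))" using d[of 1 3] by (simp add: numeral_3_eq_3)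
  show "\<sigma> (\<sigma> x) \<noteq> \<sigma> (\<sigma> (\<sigma> x))" using d[of 2 3] by (simp add: numeral_2_eq_2 numeral_3_eq_3)
qed

lemma orbit_same:
  assumes "x \<in> D" "y \<in> vorbit \<sigma> x"
  shows "vorbit \<sigma> y = vorbit \<sigma> x" "y \<in> D"
  using vorbit_eq[OF fin s_bij assms] vorbit_subset[OF s_bij assms(1)] assms(2) by auto

lemma Mt_unique:
  assumes "x \<in> D" "card (vorbit \<sigma> x) = 3" "m \<in> Mt" "m \<in> vorbit \<sigma> x" "m' \<in> Mt" "m' \<in> vorbit \<sigma> x"
  shows "m = m'"
proof -
  obtain a where a: "vorbit \<sigma> x \<inter> Mt = {a}" using one_Mt[OF assms(1,2)] card_1_singletonE by blast
  have "m \<in> vorbit \<sigma> x \<inter> Mt" "m' \<in> vorbit \<sigma> x \<inter> Mt" using assms(3-6) by simp_all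
  then show ?thesis unfolding a by simp
qed

lemma Mt_props:
  assumes m: "m \<in> Mt"
  shows "m \<in> D" "\<sigma> m \<in> D" "\<sigma> (\<sigma> m) \<in> D" "\<sigma> m \<notin> Mt" "\<sigma> (\<sigma> m) \<notin> Mt"
    "\<sigma> (\<sigma> (\<sigma> m)) = m" "m \<noteq> \<sigma> m" "m \<noteq> \<sigma> (\<sigma> m)" "\<sigma> m \<noteq> \<sigma> (\<sigma> m)"
    "vorbit \<sigma> m = {m, \<sigma> m, \<sigma> (\<sigma> m)}"
    "card (vorbit \<sigma> (\<sigma> m)) = 3" "card (vorbit \<sigma> (\<sigma> (\<sigma> m))) = 3"
proof -
  show mD: "m \<in> D" using Mt_D[OF m] .
  have c3: "card (vorbit \<sigma> m) = 3" using Mt_3[OF m] .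
  show "\<sigma> m \<in> D" "\<sigma> (\<sigma> m) \<in> D" using s_in mD by auto
  note o = orb3[OF mD c3]
  show "\<sigma> (\<sigma> (\<sigma> m)) = m" "m \<noteq> \<sigma> m" "m \<noteq> \<sigma> (\<sigma> m)" "\<sigma> m \<noteq> \<sigma> (\<sigma> m)"
    "vorbit \<sigma> m = {m, \<sigma> m, \<sigma> (\<sigma> m)}" using o by auto
  have in1: "\<sigma> m \<in> vorbit \<sigma> m" and in2: "\<sigma> (\<sigma> m) \<in> vorbit \<sigma> m" using o(5) by auto
  show "\<sigma> m \<notin> Mt"
  proof
    assume "\<sigma> m \<in> Mt"
    then have "m = \<sigma> m" using Mt_unique[OF mD c3 m _ _ in1] by simp
    then show False using o(2) by simp
  qed
  show "\<sigma> (\<sigma> m) \<notin> Mt"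
  proof
    assume "\<sigma> (\<sigma> m) \<in> Mt"
    then have "m = \<sigma> (\<sigma> m)" using Mt_unique[OF mD c3 m _ _ in2] by simp
    then show False using o(3) by simp
  qed
  show "card (vorbit \<sigma> (\<sigma> m)) = 3" using orbit_same(1)[OF mD in1] c3 by simp
  show "card (vorbit \<sigma> (\<sigma> (\<sigma> m))) = 3" using orbit_same(1)[OF mD in2] c3 by simp
qed

lemma cross_props:
  assumes x: "x \<in> D" and c4: "card (vorbit \<sigma> x) = 4"
  shows "x \<notin> Mt" "\<sigma> x \<in> D" "card (vorbit \<sigma> (\<sigma> x)) = 4" "\<sigma> x \<notin> Mt"
    "\<sigma> (\<sigma> x) \<in> D" "card (vorbit \<sigma> (\<sigma> (\<sigma> x))) = 4" "\<sigma> (\<sigma> x) \<notin> Mt"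
    "\<sigma> (\<sigma> (\<sigma> x)) \<in> D" "card (vorbit \<sigma> (\<sigma> (\<sigma> (\<sigma> x)))) = 4" "\<sigma> (\<sigma> (\<sigma> x)) \<notin> Mt"
proof -
  show "x \<notin> Mt" using Mt_3 c4 by force
  have i1: "\<sigma> x \<in> vorbit \<sigma> x" by simp
  have i2: "\<sigma> (\<sigma> x) \<in> vorbit \<sigma> x" by (rule vorbit_step) simp
  have i3: "\<sigma> (\<sigma> (\<sigma> x)) \<in> vorbit \<sigma> x" by (rule vorbit_step) (rule i2)
  show "\<sigma> x \<in> D" "\<sigma> (\<sigma> x) \<in> D" "\<sigma> (\<sigma> (\<sigma> x)) \<in> D" using orbit_same(2)[OF x] i1 i2 i3 by auto
  show c1: "card (vorbit \<sigma> (\<sigma> x)) = 4" using orbit_same(1)[OF x i1] c4 by simp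
  show c2: "card (vorbit \<sigma> (\<sigma> (\<sigma> x))) = 4" using orbit_same(1)[OF x i2] c4 by simp
  show c3: "card (vorbit \<sigma> (\<sigma> (\<sigma> (\<sigma> x)))) = 4" using orbit_same(1)[OF x i3] c4 by simp
  show "\<sigma> x \<notin> Mt" using Mt_3 c1 by force
  show "\<sigma> (\<sigma> x) \<notin> Mt" using Mt_3 c2 by force
  show "\<sigma> (\<sigma> (\<sigma> x)) \<notin> Mt" using Mt_3 c3 by force
qed

lemma nm_cases:
  assumes "x \<in> D" "x \<notin> Mt"
  shows "card (vorbit \<sigma> x) = 4 \<or> (\<exists>m\<in>Mt. x = \<sigma> m \<or> x = \<sigma> (\<sigma> m))"
proof (cases "card (vorbit \<sigma> x) = 4")
  case True then show ?thesis by simp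
next
  case False
  then have c3: "card (vorbit \<sigma> x) = 3" using orb34[OF assms(1)] by simp
  then have "vorbit \<sigma> x \<inter> Mt \<noteq> {}" using one_Mt[OF assms(1)] by auto
  then obtain m where m: "m \<in> vorbit \<sigma> x" "m \<in> Mt" by blast
  have "vorbit \<sigma> m = vorbit \<sigma> x" using orbit_same(1)[OF assms(1) m(1)] .
  then have "x \<in> {m, \<sigma> m, \<sigma> (\<sigma> m)}" using Mt_props(10)[OF m(2)] vorbit_self[of x \<sigma>] by simp
  then show ?thesis using m(2) assms(2) by auto
qed

lemma a_nm: "x \<in> D \<Longrightarrow> x \<notin> Mt \<Longrightarrow> \<alpha> x \<notin> Mt"
  using Mt_a a_inv by metis

definition links where "links S = state_links D \<alpha> \<sigma> Mt S {}"
definition resp where "resp S h \<longleftrightarrow> (\<forall>(x,y)\<in>links S. h x = h y)"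

lemma resp_D:
  assumes "resp S h"
  shows "\<And>d. d \<in> D \<Longrightarrow> d \<notin> Mt \<Longrightarrow> h (\<alpha> d) = h d"
    "\<And>d. d \<in> D \<Longrightarrow> card (vorbit \<sigma> d) = 4 \<Longrightarrow> h (\<sigma> (\<sigma> d)) = h d"
    "\<And>m. m \<in> Mt \<Longrightarrow> {m, \<alpha> m} \<in> S \<Longrightarrow> h (\<sigma> (\<alpha> m)) = h (\<sigma> m) \<and> h (\<sigma> (\<sigma> (\<alpha> m))) = h (\<sigma> (\<sigma> m))"
    "\<And>m. m \<in> Mt \<Longrightarrow> {m, \<alpha> m} \<notin> S \<Longrightarrow> h (\<sigma> (\<sigma> (\<alpha> m))) = h (\<sigma> m) \<and> h (\<sigma> (\<alpha> m)) = h (\<sigma> (\<sigma> m))"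
proof -
  have R: "h x = h y" if "(x,y) \<in> links S" for x y using assms that unfolding resp_def by blast
  show "h (\<alpha> d) = h d" if "d \<in> D" "d \<notin> Mt" for d
  proof -
    have "(d, \<alpha> d) \<in> links S" unfolding links_def state_links_def nm_darts_def using that by blast
    then show ?thesis using R by simp
  qed
  show "h (\<sigma> (\<sigma> d)) = h d" if "d \<in> D" "card (vorbit \<sigma> d) = 4" for d
  proof -
    have "(d, \<sigma> (\<sigma> d)) \<in> links S" unfolding links_def state_links_def using that by blast
    then show ?thesis using R by simp
  qed
  show "h (\<sigma> (\<alpha> m)) = h (\<sigma> m) \<and> h (\<sigma> (\<sigma> (\<alpha> m))) = h (\<sigma> (\<sigma> m))" if "m \<in> Mt" "{m, \<alpha> m} \<in> S" for m
  proof -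
    have "(\<sigma> m, \<sigma> (\<alpha> m)) \<in> links S" "(\<sigma> (\<sigma> m), \<sigma> (\<sigma> (\<alpha> m))) \<in> links S"
      unfolding links_def state_links_def using that by blast+
    then show ?thesis using R by simp
  qed
  show "h (\<sigma> (\<sigma> (\<alpha> m))) = h (\<sigma> m) \<and> h (\<sigma> (\<alpha> m)) = h (\<sigma> (\<sigma> m))" if "m \<in> Mt" "{m, \<alpha> m} \<notin> S" for m
  proof -
    have "(\<sigma> m, \<sigma> (\<sigma> (\<alpha> m))) \<in> links S" "(\<sigma> (\<sigma> m), \<sigma> (\<alpha> m)) \<in> links S"
      unfolding links_def state_links_def using that by blast+
    then show ?thesis using R by simp
  qed
qed

end

definition rep :: "'a set \<Rightarrow> 'a" where "rep A = (SOME x. x \<in> A)"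

lemma rep_in: "x \<in> A \<Longrightarrow> rep A \<in> A"
  unfolding rep_def by (rule someI)

lemma sum4:
  assumes "a \<noteq> b" "a \<noteq> c" "a \<noteq> d" "b \<noteq> c" "b \<noteq> d" "c \<noteq> d"
  shows "(\<Sum>x\<in>{a,b,c,d}. F x) = F a + F b + F c + (F d :: 'b::comm_monoid_add)"
  using assms by (simp add: add.assoc)

lemma sum3:
  assumes "a \<noteq> b" "a \<noteq> c" "b \<noteq> c"
  shows "(\<Sum>x\<in>{a,b,c}. F x) = F a + F b + (F c :: 'b::comm_monoid_add)"
  using assms by (simp add: add.assoc)

lemma sum2:
  assumes "a \<noteq> b"
  shows "(\<Sum>x\<in>{a,b}. F x) = F a + (F b :: 'b::comm_monoid_add)"
  using assms by simp

context pmd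
begin

definition Wi where
  "Wi h i = {x\<in>D. x \<notin> Mt \<and> h x = i} \<union> {m\<in>Mt. (h (\<sigma> m) = i) \<noteq> (h (\<sigma> (\<sigma> m)) = i)}"

lemma Wi_sub: "Wi h i \<subseteq> D"
  unfolding Wi_def using Mt_sub by blast

lemma Wi_nm: "x \<in> D \<Longrightarrow> x \<notin> Mt \<Longrightarrow> x \<in> Wi h i \<longleftrightarrow> h x = i"
  unfolding Wi_def by blast

lemma Wi_Mt: "m \<in> Mt \<Longrightarrow> m \<in> Wi h i \<longleftrightarrow> (h (\<sigma> m) = i) \<noteq> (h (\<sigma> (\<sigma> m)) = i)"
  unfolding Wi_def by blast

lemma Wi_alpha:
  assumes r: "resp S h" and x: "x \<in> D"
  shows "x \<in> Wi h i \<longleftrightarrow> \<alpha> x \<in> Wi h i"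
proof (cases "x \<in> Mt")
  case True
  then have ax: "\<alpha> x \<in> Mt" using Mt_a by blast
  have "(h (\<sigma> x) = i) \<noteq> (h (\<sigma> (\<sigma> x)) = i) \<longleftrightarrow> (h (\<sigma> (\<alpha> x)) = i) \<noteq> (h (\<sigma> (\<sigma> (\<alpha> x))) = i)"
  proof (cases "{x, \<alpha> x} \<in> S")
    case True
    then show ?thesis using resp_D(3)[OF r \<open>x \<in> Mt\<close>] by simp
  next
    case False
    then show ?thesis using resp_D(4)[OF r \<open>x \<in> Mt\<close>] by auto
  qed
  then show ?thesis unfolding Wi_Mt[OF True] Wi_Mt[OF ax] .
next
  case False
  have ax: "\<alpha> x \<notin> Mt" "\<alpha> x \<in> D" using a_nm[OF x False] a_in[OF x] by auto
  show ?thesis unfolding Wi_nm[OF x False] Wi_nm[OF ax(2,1)] resp_D(1)[OF r x False] by (rule refl)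
qed

lemma card_bit: "finite Ob \<Longrightarrow> (of_nat (card (W \<inter> Ob)) :: bit) = (\<Sum>y\<in>Ob. of_bool (y \<in> W))"
proof -
  assume f: "finite Ob"
  have "W \<inter> Ob = {y\<in>Ob. y \<in> W}" by blast
  then show ?thesis using bit_sum_card[OF f, of "\<lambda>y. y \<in> W"] by simp
qed

lemma Wi_even:
  assumes r: "resp S h" and x: "x \<in> D"
  shows "even (card (Wi h i \<inter> vorbit \<sigma> x))"
proof -
  have fO: "finite (vorbit \<sigma> x)" using vorbit_finite[OF fin s_bij x] .
  have "(\<Sum>y\<in>vorbit \<sigma> x. of_bool (y \<in> Wi h i)) = (0::bit)"
  proof (cases "card (vorbit \<sigma> x) = 4")
    case True
    note o = orb4[OF x True]
    note c = cross_props[OF x True]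
    have h2: "h (\<sigma> (\<sigma> x)) = h x" using resp_D(2)[OF r x True] .
    have h3: "h (\<sigma> (\<sigma> (\<sigma> x))) = h (\<sigma> x)" using resp_D(2)[OF r c(2,3)] .
    have "(\<Sum>y\<in>vorbit \<sigma> x. of_bool (y \<in> Wi h i)) =
      of_bool (x \<in> Wi h i) + of_bool (\<sigma> x \<in> Wi h i) + of_bool (\<sigma> (\<sigma> x) \<in> Wi h i)
      + (of_bool (\<sigma> (\<sigma> (\<sigma> x)) \<in> Wi h i) :: bit)"
      unfolding o(8) by (rule sum4) (use o in auto)
    also have "\<dots> = of_bool (h x = i) + of_bool (h (\<sigma> x) = i) + of_bool (h x = i) + of_bool (h (\<sigma> x) = i)"
      unfolding Wi_nm[OF x c(1), of h i] Wi_nm[OF c(2,4), of h i] Wi_nm[OF c(5,7), of h i]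
        Wi_nm[OF c(8,10), of h i] h2 h3 by (rule refl)
    also have "\<dots> = 0"
      by (cases "h x = i"; cases "h (\<sigma> x) = i") simp_all
    finally show ?thesis .
  next
    case False
    then have c3: "card (vorbit \<sigma> x) = 3" using orb34[OF x] by simp
    then have "vorbit \<sigma> x \<inter> Mt \<noteq> {}" using one_Mt[OF x] by auto
    then obtain m where m: "m \<in> vorbit \<sigma> x" "m \<in> Mt" by blast
    have eq: "vorbit \<sigma> x = {m, \<sigma> m, \<sigma> (\<sigma> m)}"
      using orbit_same(1)[OF x m(1)] Mt_props(10)[OF m(2)] by simp
    note p = Mt_props[OF m(2)]
    have "(\<Sum>y\<in>vorbit \<sigma> x. of_bool (y \<in> Wi h i)) =
      of_bool (m \<in> Wi h i) + of_bool (\<sigma> m \<in> Wi h i) + (of_bool (\<sigma> (\<sigma> m) \<in> Wi h i) :: bit)"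
      unfolding eq by (rule sum3) (use p in auto)
    also have "\<dots> = of_bool ((h (\<sigma> m) = i) \<noteq> (h (\<sigma> (\<sigma> m)) = i)) + of_bool (h (\<sigma> m) = i)
        + of_bool (h (\<sigma> (\<sigma> m)) = i)"
      unfolding Wi_Mt[OF m(2), of h i] Wi_nm[OF p(2,4), of h i] Wi_nm[OF p(3,5), of h i] by (rule refl)
    also have "\<dots> = 0"
      by (cases "h (\<sigma> m) = i"; cases "h (\<sigma> (\<sigma> m)) = i") simp_all
    finally show ?thesis .
  qed
  then have "(of_nat (card (Wi h i \<inter> vorbit \<sigma> x)) :: bit) = 0" using card_bit[OF fO] by simp
  then show ?thesis using bit_of_nat_even by blast
qed

lemma U_exists:
  assumes r: "resp S h"
  shows "\<exists>U. U \<subseteq> D \<and> (\<forall>x\<in>D. x \<in> U \<longleftrightarrow> \<sigma> (\<alpha> x) \<in> U) \<and>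
     (\<forall>x\<in>D. x \<in> Wi h i \<longleftrightarrow> (x \<in> U) \<noteq> (\<alpha> x \<in> U))"
  by (rule planar_cocycle[OF euler Wi_sub])
     (use Wi_alpha[OF r] Wi_even[OF r] in auto)

end

context pmd
begin

abbreviation "XX \<equiv> vcrossings D \<sigma>"
abbreviation "ME \<equiv> match_edges \<alpha> Mt"

lemma X_elem:
  assumes "Ob \<in> XX"
  shows "rep Ob \<in> D" "card (vorbit \<sigma> (rep Ob)) = 4" "vorbit \<sigma> (rep Ob) = Ob"
proof -
  obtain d where d: "d \<in> D" "card (vorbit \<sigma> d) = 4" "Ob = vorbit \<sigma> d"
    using assms unfolding vcrossings_def by blast
  have "d \<in> Ob" using d(3) by simp
  then have r: "rep Ob \<in> vorbit \<sigma> d" using rep_in[of d Ob] d(3) by simp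
  have e: "vorbit \<sigma> (rep Ob) = vorbit \<sigma> d" using orbit_same(1)[OF d(1) r] .
  show "rep Ob \<in> D" using orbit_same(2)[OF d(1) r] .
  show "card (vorbit \<sigma> (rep Ob)) = 4" using e d(2) by simp
  show "vorbit \<sigma> (rep Ob) = Ob" using e d(3) by simp
qed

lemma ME_elem:
  assumes "e \<in> ME"
  shows "rep e \<in> Mt" "e = {rep e, \<alpha> (rep e)}" "rep e \<noteq> \<alpha> (rep e)"
proof -
  obtain m where m: "m \<in> Mt" "e = {m, \<alpha> m}" using assms unfolding match_edges_def by blast
  have mD: "m \<in> D" using Mt_D[OF m(1)] .
  have "rep e \<in> e" using rep_in[of m e] m(2) by simp
  then have c: "rep e = m \<or> rep e = \<alpha> m" using m(2) by simp
  have am: "\<alpha> m \<in> Mt" using Mt_a[OF m(1)] .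
  have aa: "\<alpha> (\<alpha> m) = m" using a_inv[OF mD] .
  show r: "rep e \<in> Mt" using c m(1) am by (elim disjE) simp_all
  show "e = {rep e, \<alpha> (rep e)}"
  proof (cases "rep e = m")
    case True then show ?thesis using m(2) by simp
  next
    case False then have "rep e = \<alpha> m" using c by simp
    then show ?thesis using m(2) aa by (simp add: insert_commute)
  qed
  show "rep e \<noteq> \<alpha> (rep e)" using a_fp[OF Mt_D[OF r]] by (rule not_sym)
qed

lemma X_fin: "finite XX"
proof -
  have "XX \<subseteq> vorbit \<sigma> ` D" unfolding vcrossings_def by blast
  then show ?thesis using fin finite_subset by blast
qed

lemma Mt_fin: "finite Mt" using Mt_sub fin finite_subset by blast

lemma ME_fin: "finite ME" unfolding match_edges_def using Mt_fin by simp

lemma cross_union: "\<Union>XX = {x\<in>D. card (vorbit \<sigma> x) = 4}"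
proof
  show "\<Union>XX \<subseteq> {x\<in>D. card (vorbit \<sigma> x) = 4}"
  proof
    fix x assume "x \<in> \<Union>XX"
    then obtain d where d: "d \<in> D" "card (vorbit \<sigma> d) = 4" "x \<in> vorbit \<sigma> d"
      unfolding vcrossings_def by blast
    then show "x \<in> {x\<in>D. card (vorbit \<sigma> x) = 4}" using orbit_same[OF d(1) d(3)] by simp
  qed
  show "{x\<in>D. card (vorbit \<sigma> x) = 4} \<subseteq> \<Union>XX"
  proof
    fix x assume "x \<in> {x\<in>D. card (vorbit \<sigma> x) = 4}"
    then have "vorbit \<sigma> x \<in> XX" "x \<in> vorbit \<sigma> x" unfolding vcrossings_def by auto
    then show "x \<in> \<Union>XX" by blast
  qed
qed

lemma X_disj: "Ob1 \<in> XX \<Longrightarrow> Ob2 \<in> XX \<Longrightarrow> Ob1 \<noteq> Ob2 \<Longrightarrow> Ob1 \<inter> Ob2 = {}"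
  unfolding vcrossings_def using vorbit_disj[OF fin s_bij] by blast

lemma ME_union: "\<Union>ME = Mt"
  unfolding match_edges_def using Mt_a by blast

lemma ME_disj:
  assumes "e1 \<in> ME" "e2 \<in> ME" "e1 \<noteq> e2"
  shows "e1 \<inter> e2 = {}"
proof (rule ccontr)
  assume "e1 \<inter> e2 \<noteq> {}"
  then obtain z where z: "z \<in> e1" "z \<in> e2" by blast
  obtain m1 where m1: "m1 \<in> Mt" "e1 = {m1, \<alpha> m1}" using assms(1) unfolding match_edges_def by blast
  obtain m2 where m2: "m2 \<in> Mt" "e2 = {m2, \<alpha> m2}" using assms(2) unfolding match_edges_def by blast
  have i1: "\<alpha> (\<alpha> m1) = m1" using a_inv Mt_D m1(1) by blast
  have i2: "\<alpha> (\<alpha> m2) = m2" using a_inv Mt_D m2(1) by blast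
  have z1: "z = m1 \<or> z = \<alpha> m1" using z(1) m1(2) by simp
  have z2: "z = m2 \<or> z = \<alpha> m2" using z(2) m2(2) by simp
  have "m1 = m2 \<or> m1 = \<alpha> m2"
  proof (cases "z = m1")
    case True
    then show ?thesis using z2 by auto
  next
    case False
    then have zz: "z = \<alpha> m1" using z1 by simp
    then have "m1 = \<alpha> z" using i1 by simp
    then show ?thesis using z2 i2 by auto
  qed
  then have "e1 = e2" using m1(2) m2(2) i2 by (auto simp: insert_commute)
  then show False using assms(3) by simp
qed

lemma N3_disj:
  assumes "m1 \<in> Mt" "m2 \<in> Mt" "m1 \<noteq> m2"
  shows "{\<sigma> m1, \<sigma> (\<sigma> m1)} \<inter> {\<sigma> m2, \<sigma> (\<sigma> m2)} = {}"
proof (rule ccontr)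
  assume "{\<sigma> m1, \<sigma> (\<sigma> m1)} \<inter> {\<sigma> m2, \<sigma> (\<sigma> m2)} \<noteq> {}"
  then obtain z where z: "z \<in> {\<sigma> m1, \<sigma> (\<sigma> m1)}" "z \<in> {\<sigma> m2, \<sigma> (\<sigma> m2)}" by blast
  have m1D: "m1 \<in> D" and m2D: "m2 \<in> D" using Mt_D assms by auto
  have "z \<in> vorbit \<sigma> m1" using z(1) Mt_props(10)[OF assms(1)] by auto
  moreover have "z \<in> vorbit \<sigma> m2" using z(2) Mt_props(10)[OF assms(2)] by auto
  ultimately have "vorbit \<sigma> m1 = vorbit \<sigma> m2" using orbit_same(1)[OF m1D] orbit_same(1)[OF m2D] by metis
  then have "m2 \<in> vorbit \<sigma> m1" using vorbit_self[of m2 \<sigma>] by simp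
  then have "m1 = m2" using Mt_unique[OF m1D Mt_3[OF assms(1)] assms(1) vorbit_self assms(2)] by simp
  then show False using assms(3) by simp
qed

lemma decomp:
  fixes F :: "'d \<Rightarrow> 'b::comm_monoid_add"
  shows "(\<Sum>x\<in>D - Mt. F x) = (\<Sum>Ob\<in>XX. \<Sum>x\<in>Ob. F x) + (\<Sum>e\<in>ME. \<Sum>m\<in>e. F (\<sigma> m) + F (\<sigma> (\<sigma> m)))"
proof -
  let ?Cx = "{x\<in>D. card (vorbit \<sigma> x) = 4}"
  let ?N3 = "\<Union>m\<in>Mt. {\<sigma> m, \<sigma> (\<sigma> m)}"
  have split: "D - Mt = ?Cx \<union> ?N3"
  proof
    show "D - Mt \<subseteq> ?Cx \<union> ?N3" using nm_cases by blast
    show "?Cx \<union> ?N3 \<subseteq> D - Mt" using cross_props(1) Mt_props(2-5) by blast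
  qed
  have disj: "?Cx \<inter> ?N3 = {}" using Mt_props(11,12) by fastforce
  have finC: "finite ?Cx" using fin by simp
  have finN: "finite ?N3" using Mt_fin by simp
  have "(\<Sum>x\<in>D - Mt. F x) = (\<Sum>x\<in>?Cx. F x) + (\<Sum>x\<in>?N3. F x)"
    unfolding split by (rule sum.union_disjoint[OF finC finN disj])
  moreover have "(\<Sum>x\<in>?Cx. F x) = (\<Sum>Ob\<in>XX. \<Sum>x\<in>Ob. F x)"
  proof -
    have "(\<Sum>x\<in>\<Union>XX. F x) = (\<Sum>Ob\<in>XX. \<Sum>x\<in>Ob. F x)"
    proof (subst sum.Union_disjoint)
      show "\<forall>A\<in>XX. finite A" using vorbit_finite[OF fin s_bij] unfolding vcrossings_def by blast
      show "\<forall>A\<in>XX. \<forall>B\<in>XX. A \<noteq> B \<longrightarrow> A \<inter> B = {}" using X_disj by blast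
    qed simp
    then show ?thesis unfolding cross_union .
  qed
  moreover have "(\<Sum>x\<in>?N3. F x) = (\<Sum>m\<in>Mt. F (\<sigma> m) + F (\<sigma> (\<sigma> m)))"
  proof -
    have "(\<Sum>x\<in>?N3. F x) = (\<Sum>m\<in>Mt. \<Sum>x\<in>{\<sigma> m, \<sigma> (\<sigma> m)}. F x)"
      by (rule sum.UNION_disjoint[OF Mt_fin]) (use N3_disj in auto)
    also have "\<dots> = (\<Sum>m\<in>Mt. F (\<sigma> m) + F (\<sigma> (\<sigma> m)))"
      by (rule sum.cong[OF refl], rule sum2, rule Mt_props(9))
    finally show ?thesis .
  qed
  moreover have "(\<Sum>m\<in>Mt. F (\<sigma> m) + F (\<sigma> (\<sigma> m))) = (\<Sum>e\<in>ME. \<Sum>m\<in>e. F (\<sigma> m) + F (\<sigma> (\<sigma> m)))"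
  proof -
    have "(\<Sum>m\<in>\<Union>ME. F (\<sigma> m) + F (\<sigma> (\<sigma> m))) = (\<Sum>e\<in>ME. \<Sum>m\<in>e. F (\<sigma> m) + F (\<sigma> (\<sigma> m)))"
    proof (subst sum.Union_disjoint)
      show "\<forall>A\<in>ME. finite A" unfolding match_edges_def by blast
      show "\<forall>A\<in>ME. \<forall>B\<in>ME. A \<noteq> B \<longrightarrow> A \<inter> B = {}" using ME_disj by blast
    qed simp
    then show ?thesis unfolding ME_union .
  qed
  ultimately show ?thesis by simp
qed

end

context pmd
begin

lemma aU:
  assumes Uc: "\<forall>x\<in>D. x \<in> U \<longleftrightarrow> \<sigma> (\<alpha> x) \<in> U" and y: "y \<in> D"
  shows "\<alpha> y \<in> U \<longleftrightarrow> \<sigma> y \<in> U"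
proof -
  have "\<alpha> y \<in> U \<longleftrightarrow> \<sigma> (\<alpha> (\<alpha> y)) \<in> U" using bspec[OF Uc a_in[OF y]] .
  then show ?thesis using a_inv[OF y] by simp
qed

lemma wf:
  assumes Uc: "\<forall>x\<in>D. x \<in> U \<longleftrightarrow> \<sigma> (\<alpha> x) \<in> U"
    and UW: "\<forall>x\<in>D. x \<in> Wi h i \<longleftrightarrow> (x \<in> U) \<noteq> (\<alpha> x \<in> U)"
    and y: "y \<in> D" "y \<notin> Mt"
  shows "((y \<in> U) \<noteq> (\<sigma> y \<in> U)) = (h y = i)"
proof -
  have "y \<in> Wi h i \<longleftrightarrow> (y \<in> U) \<noteq> (\<alpha> y \<in> U)" using bspec[OF UW y(1)] .
  then show ?thesis using Wi_nm[OF y, of h i] aU[OF Uc y(1)] by simp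
qed

lemma cross_local:
  fixes h :: "'d \<Rightarrow> nat"
  assumes r: "resp S h" and Uc: "\<forall>x\<in>D. x \<in> U \<longleftrightarrow> \<sigma> (\<alpha> x) \<in> U"
    and UW: "\<forall>x\<in>D. x \<in> Wi h i \<longleftrightarrow> (x \<in> U) \<noteq> (\<alpha> x \<in> U)" and Ob: "Ob \<in> XX"
  shows "(\<Sum>x\<in>Ob. of_bool (h x > i \<and> \<alpha> x \<in> U) :: bit) =
    of_bool (h (rep Ob) > i \<and> h (\<sigma> (rep Ob)) = i) + of_bool (h (\<sigma> (rep Ob)) > i \<and> h (rep Ob) = i)"
proof -
  define x where "x = rep Ob"
  have x: "x \<in> D" "card (vorbit \<sigma> x) = 4" "vorbit \<sigma> x = Ob" using X_elem[OF Ob] unfolding x_def by auto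
  note o = orb4[OF x(1,2)]
  note c = cross_props[OF x(1,2)]
  have h2: "h (\<sigma> (\<sigma> x)) = h x" using resp_D(2)[OF r x(1,2)] .
  have h3: "h (\<sigma> (\<sigma> (\<sigma> x))) = h (\<sigma> x)" using resp_D(2)[OF r c(2,3)] .
  have "(\<Sum>y\<in>Ob. of_bool (h y > i \<and> \<alpha> y \<in> U) :: bit) =
     of_bool (h x > i \<and> \<alpha> x \<in> U) + of_bool (h (\<sigma> x) > i \<and> \<alpha> (\<sigma> x) \<in> U)
     + of_bool (h (\<sigma> (\<sigma> x)) > i \<and> \<alpha> (\<sigma> (\<sigma> x)) \<in> U)
     + of_bool (h (\<sigma> (\<sigma> (\<sigma> x))) > i \<and> \<alpha> (\<sigma> (\<sigma> (\<sigma> x))) \<in> U)"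
    unfolding x(3)[symmetric] o(8) by (rule sum4) (use o in auto)
  also have "\<dots> = of_bool (h x > i \<and> \<sigma> x \<in> U) + of_bool (h (\<sigma> x) > i \<and> \<sigma> (\<sigma> x) \<in> U)
     + of_bool (h x > i \<and> \<sigma> (\<sigma> (\<sigma> x)) \<in> U) + of_bool (h (\<sigma> x) > i \<and> x \<in> U)"
    unfolding aU[OF Uc x(1)] aU[OF Uc c(2)] aU[OF Uc c(5)] aU[OF Uc c(8)] h2 h3 o(1) by (rule refl)
  also have "\<dots> = of_bool (h x > i \<and> h (\<sigma> x) = i) + of_bool (h (\<sigma> x) > i \<and> h x = i)"
  proof (rule bit_cross)
    show "((x \<in> U) \<noteq> (\<sigma> x \<in> U)) = (h x = i)" using wf[OF Uc UW x(1) c(1)] .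
    show "((\<sigma> x \<in> U) \<noteq> (\<sigma> (\<sigma> x) \<in> U)) = (h (\<sigma> x) = i)" using wf[OF Uc UW c(2,4)] .
    show "((\<sigma> (\<sigma> x) \<in> U) \<noteq> (\<sigma> (\<sigma> (\<sigma> x)) \<in> U)) = (h x = i)" using wf[OF Uc UW c(5,7)] h2 by simp
    show "((\<sigma> (\<sigma> (\<sigma> x)) \<in> U) \<noteq> (x \<in> U)) = (h (\<sigma> x) = i)" using wf[OF Uc UW c(8,10)] h3 o(1) by simp
  qed auto
  finally show ?thesis unfolding x_def .
qed

lemma edge_local:
  fixes h :: "'d \<Rightarrow> nat"
  assumes r: "resp S h" and Uc: "\<forall>x\<in>D. x \<in> U \<longleftrightarrow> \<sigma> (\<alpha> x) \<in> U"
    and UW: "\<forall>x\<in>D. x \<in> Wi h i \<longleftrightarrow> (x \<in> U) \<noteq> (\<alpha> x \<in> U)" and e: "e \<in> ME"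
  shows "(\<Sum>m\<in>e. of_bool (h (\<sigma> m) > i \<and> \<alpha> (\<sigma> m) \<in> U) + of_bool (h (\<sigma> (\<sigma> m)) > i \<and> \<alpha> (\<sigma> (\<sigma> m)) \<in> U) :: bit)
    = of_bool (e \<in> S) * (of_bool (h (\<sigma> (rep e)) > i \<and> h (\<sigma> (\<sigma> (rep e))) = i)
        + of_bool (h (\<sigma> (\<sigma> (rep e))) > i \<and> h (\<sigma> (rep e)) = i))"
proof -
  define m where "m = rep e"
  have m: "m \<in> Mt" "e = {m, \<alpha> m}" "m \<noteq> \<alpha> m" using ME_elem[OF e] unfolding m_def by auto
  have am: "\<alpha> m \<in> Mt" using Mt_a[OF m(1)] .
  note p = Mt_props[OF m(1)]
  note q = Mt_props[OF am]
  let ?G = "\<lambda>m. of_bool (h (\<sigma> m) > i \<and> \<alpha> (\<sigma> m) \<in> U) + of_bool (h (\<sigma> (\<sigma> m)) > i \<and> \<alpha> (\<sigma> (\<sigma> m)) \<in> U) :: bit"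
  have "(\<Sum>m\<in>e. ?G m) = ?G m + ?G (\<alpha> m)" unfolding m(2) by (rule sum2) (rule m(3))
  also have "\<dots> = of_bool (h (\<sigma> m) > i \<and> \<sigma> (\<sigma> m) \<in> U) + of_bool (h (\<sigma> (\<sigma> m)) > i \<and> m \<in> U)
     + of_bool (h (\<sigma> (\<alpha> m)) > i \<and> \<sigma> (\<sigma> (\<alpha> m)) \<in> U) + of_bool (h (\<sigma> (\<sigma> (\<alpha> m))) > i \<and> \<alpha> m \<in> U)"
    unfolding aU[OF Uc p(2)] aU[OF Uc p(3)] aU[OF Uc q(2)] aU[OF Uc q(3)] p(6) q(6)
    by (simp only: add.assoc)
  also have "\<dots> = of_bool (e \<in> S) * (of_bool (h (\<sigma> m) > i \<and> h (\<sigma> (\<sigma> m)) = i)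
        + of_bool (h (\<sigma> (\<sigma> m)) > i \<and> h (\<sigma> m) = i))"
  proof -
    have w1: "((\<sigma> m \<in> U) \<noteq> (\<sigma> (\<sigma> m) \<in> U)) = (h (\<sigma> m) = i)" using wf[OF Uc UW p(2,4)] .
    have w2: "((\<sigma> (\<sigma> m) \<in> U) \<noteq> (m \<in> U)) = (h (\<sigma> (\<sigma> m)) = i)" using wf[OF Uc UW p(3,5)] p(6) by simp
    have w0: "((m \<in> U) \<noteq> (\<alpha> m \<in> U)) = ((h (\<sigma> m) = i) \<noteq> (h (\<sigma> (\<sigma> m)) = i))"
      using bspec[OF UW p(1)] Wi_Mt[OF m(1), of h i] by simp
    have w3: "((\<sigma> (\<alpha> m) \<in> U) \<noteq> (\<sigma> (\<sigma> (\<alpha> m)) \<in> U)) = (h (\<sigma> (\<alpha> m)) = i)" using wf[OF Uc UW q(2,4)] .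
    have w4: "((\<sigma> (\<sigma> (\<alpha> m)) \<in> U) \<noteq> (\<alpha> m \<in> U)) = (h (\<sigma> (\<sigma> (\<alpha> m))) = i)" using wf[OF Uc UW q(3,5)] q(6) by simp
    show ?thesis
    proof (cases "e \<in> S")
      case True
      then have "{m, \<alpha> m} \<in> S" using m(2) by simp
      then have hh: "h (\<sigma> (\<alpha> m)) = h (\<sigma> m)" "h (\<sigma> (\<sigma> (\<alpha> m))) = h (\<sigma> (\<sigma> m))" using resp_D(3)[OF r m(1)] by auto
      have "of_bool (h (\<sigma> m) > i \<and> \<sigma> (\<sigma> m) \<in> U) + of_bool (h (\<sigma> (\<sigma> m)) > i \<and> m \<in> U)
        + of_bool (h (\<sigma> m) > i \<and> \<sigma> (\<sigma> (\<alpha> m)) \<in> U) + of_bool (h (\<sigma> (\<sigma> m)) > i \<and> \<alpha> m \<in> U)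
        = (of_bool (h (\<sigma> m) > i \<and> h (\<sigma> (\<sigma> m)) = i) + of_bool (h (\<sigma> (\<sigma> m)) > i \<and> h (\<sigma> m) = i) :: bit)"
        by (rule bit_edge1[OF w1 w2 w0 w3[unfolded hh] w4[unfolded hh]]) auto
      then show ?thesis using True unfolding hh by simp
    next
      case False
      then have "{m, \<alpha> m} \<notin> S" using m(2) by simp
      then have hh: "h (\<sigma> (\<sigma> (\<alpha> m))) = h (\<sigma> m)" "h (\<sigma> (\<alpha> m)) = h (\<sigma> (\<sigma> m))" using resp_D(4)[OF r m(1)] by auto
      have "of_bool (h (\<sigma> m) > i \<and> \<sigma> (\<sigma> m) \<in> U) + of_bool (h (\<sigma> (\<sigma> m)) > i \<and> m \<in> U)
        + of_bool (h (\<sigma> (\<sigma> m)) > i \<and> \<sigma> (\<sigma> (\<alpha> m)) \<in> U) + of_bool (h (\<sigma> m) > i \<and> \<alpha> m \<in> U)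
        = (0 :: bit)"
        by (rule bit_edge0[OF w1 w2 w0 w3[unfolded hh] w4[unfolded hh]]) auto
      then show ?thesis using False unfolding hh by simp
    qed
  qed
  finally show ?thesis unfolding m_def .
qed

lemma claim1:
  fixes h :: "'d \<Rightarrow> nat"
  assumes r: "resp S h" and Uc: "\<forall>x\<in>D. x \<in> U \<longleftrightarrow> \<sigma> (\<alpha> x) \<in> U"
    and UW: "\<forall>x\<in>D. x \<in> Wi h i \<longleftrightarrow> (x \<in> U) \<noteq> (\<alpha> x \<in> U)"
  shows "(\<Sum>x\<in>D - Mt. of_bool (h x > i \<and> \<alpha> x \<in> U) :: bit) = 0"
proof -
  let ?P = "{x\<in>D - Mt. h x > i \<and> \<alpha> x \<in> U}"
  have "even (card ?P)"
  proof (rule even_card_involution[where f=\<alpha>])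
    show "finite ?P" using fin by simp
    show "\<forall>x\<in>?P. \<alpha> x \<in> ?P \<and> \<alpha> (\<alpha> x) = x \<and> \<alpha> x \<noteq> x"
    proof
      fix x assume x: "x \<in> ?P"
      then have xD: "x \<in> D" and xM: "x \<notin> Mt" and hx: "h x > i" and ax: "\<alpha> x \<in> U" by auto
      have axD: "\<alpha> x \<in> D" "\<alpha> x \<notin> Mt" using a_in[OF xD] a_nm[OF xD xM] by auto
      have "x \<notin> Wi h i" using Wi_nm[OF xD xM, of h i] hx by simp
      then have "x \<in> U" using bspec[OF UW xD] ax by simp
      moreover have "h (\<alpha> x) = h x" using resp_D(1)[OF r xD xM] .
      ultimately have "\<alpha> x \<in> ?P" using axD hx a_inv[OF xD] by simp
      then show "\<alpha> x \<in> ?P \<and> \<alpha> (\<alpha> x) = x \<and> \<alpha> x \<noteq> x" using a_inv[OF xD] a_fp[OF xD] by simp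
    qed
  qed
  then have "(of_nat (card ?P) :: bit) = 0" using bit_of_nat_even by blast
  then show ?thesis using bit_sum_card[of "D - Mt" "\<lambda>x. h x > i \<and> \<alpha> x \<in> U"] fin by simp
qed

lemma per_i:
  fixes h :: "'d \<Rightarrow> nat"
  assumes r: "resp S h"
  shows "(\<Sum>Ob\<in>XX. of_bool (h (rep Ob) > i \<and> h (\<sigma> (rep Ob)) = i) + of_bool (h (\<sigma> (rep Ob)) > i \<and> h (rep Ob) = i))
    + (\<Sum>e\<in>ME. of_bool (e \<in> S) * (of_bool (h (\<sigma> (rep e)) > i \<and> h (\<sigma> (\<sigma> (rep e))) = i)
        + of_bool (h (\<sigma> (\<sigma> (rep e))) > i \<and> h (\<sigma> (rep e)) = i))) = (0::bit)"
proof -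
  obtain U where U: "U \<subseteq> D" "\<forall>x\<in>D. x \<in> U \<longleftrightarrow> \<sigma> (\<alpha> x) \<in> U"
    "\<forall>x\<in>D. x \<in> Wi h i \<longleftrightarrow> (x \<in> U) \<noteq> (\<alpha> x \<in> U)"
    using U_exists[OF r, of i] by blast
  let ?F = "\<lambda>x. of_bool (h x > i \<and> \<alpha> x \<in> U) :: bit"
  have "0 = (\<Sum>x\<in>D - Mt. ?F x)" using claim1[OF r U(2,3)] by simp
  also have "\<dots> = (\<Sum>Ob\<in>XX. \<Sum>x\<in>Ob. ?F x) + (\<Sum>e\<in>ME. \<Sum>m\<in>e. ?F (\<sigma> m) + ?F (\<sigma> (\<sigma> m)))"
    by (rule decomp)
  also have "(\<Sum>Ob\<in>XX. \<Sum>x\<in>Ob. ?F x) = (\<Sum>Ob\<in>XX. of_bool (h (rep Ob) > i \<and> h (\<sigma> (rep Ob)) = i) + of_bool (h (\<sigma> (rep Ob)) > i \<and> h (rep Ob) = i))"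
    by (rule sum.cong[OF refl]) (rule cross_local[OF r U(2,3)])
  also have "(\<Sum>e\<in>ME. \<Sum>m\<in>e. ?F (\<sigma> m) + ?F (\<sigma> (\<sigma> m))) = (\<Sum>e\<in>ME. of_bool (e \<in> S) * (of_bool (h (\<sigma> (rep e)) > i \<and> h (\<sigma> (\<sigma> (rep e))) = i)
        + of_bool (h (\<sigma> (\<sigma> (rep e))) > i \<and> h (\<sigma> (rep e)) = i)))"
    by (rule sum.cong[OF refl]) (rule edge_local[OF r U(2,3)])
  finally show ?thesis by simp
qed

end

context pmd
begin

lemma cross_diff:
  fixes h :: "'d \<Rightarrow> nat"
  assumes r: "resp S h" and Ob: "Ob \<in> XX"
  shows "(\<exists>d\<in>Ob. h d \<noteq> h (\<sigma> d)) \<longleftrightarrow> h (rep Ob) \<noteq> h (\<sigma> (rep Ob))"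
proof -
  define x where "x = rep Ob"
  have x: "x \<in> D" "card (vorbit \<sigma> x) = 4" "vorbit \<sigma> x = Ob" using X_elem[OF Ob] unfolding x_def by auto
  note o = orb4[OF x(1,2)]
  note c = cross_props[OF x(1,2)]
  have h2: "h (\<sigma> (\<sigma> x)) = h x" using resp_D(2)[OF r x(1,2)] .
  have h3: "h (\<sigma> (\<sigma> (\<sigma> x))) = h (\<sigma> x)" using resp_D(2)[OF r c(2,3)] .
  have Obe: "Ob = {x, \<sigma> x, \<sigma> (\<sigma> x), \<sigma> (\<sigma> (\<sigma> x))}" using x(3) o(8) by simp
  have "(\<exists>d\<in>Ob. h d \<noteq> h (\<sigma> d)) \<longleftrightarrow> h x \<noteq> h (\<sigma> x)"
  proof
    assume "\<exists>d\<in>Ob. h d \<noteq> h (\<sigma> d)"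
    then obtain d where d: "d \<in> Ob" "h d \<noteq> h (\<sigma> d)" by blast
    have "d = x \<or> d = \<sigma> x \<or> d = \<sigma> (\<sigma> x) \<or> d = \<sigma> (\<sigma> (\<sigma> x))" using d(1) Obe by simp
    then show "h x \<noteq> h (\<sigma> x)"
    proof (elim disjE)
      assume "d = x" then show ?thesis using d(2) by simp
    next
      assume "d = \<sigma> x" then show ?thesis using d(2) h2 by simp
    next
      assume "d = \<sigma> (\<sigma> x)" then show ?thesis using d(2) h2 h3 by simp
    next
      assume "d = \<sigma> (\<sigma> (\<sigma> x))" then show ?thesis using d(2) h3 o(1) by simp
    qed
  next
    assume "h x \<noteq> h (\<sigma> x)"
    moreover have "x \<in> Ob" using Obe by simp
    ultimately show "\<exists>d\<in>Ob. h d \<noteq> h (\<sigma> d)" by blast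
  qed
  then show ?thesis unfolding x_def .
qed

lemma edge_diff:
  fixes h :: "'d \<Rightarrow> nat"
  assumes r: "resp S h" and e: "e \<in> ME" and eS: "e \<in> S"
  shows "(\<exists>m\<in>e. h (\<sigma> m) \<noteq> h (\<sigma> (\<sigma> m))) \<longleftrightarrow> h (\<sigma> (rep e)) \<noteq> h (\<sigma> (\<sigma> (rep e)))"
proof -
  define m where "m = rep e"
  have m: "m \<in> Mt" "e = {m, \<alpha> m}" "m \<noteq> \<alpha> m" using ME_elem[OF e] unfolding m_def by auto
  have "{m, \<alpha> m} \<in> S" using eS m(2) by simp
  then have hh: "h (\<sigma> (\<alpha> m)) = h (\<sigma> m)" "h (\<sigma> (\<sigma> (\<alpha> m))) = h (\<sigma> (\<sigma> m))"
    using resp_D(3)[OF r m(1)] by auto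
  have "(\<exists>m'\<in>e. h (\<sigma> m') \<noteq> h (\<sigma> (\<sigma> m'))) \<longleftrightarrow> h (\<sigma> m) \<noteq> h (\<sigma> (\<sigma> m))"
    unfolding m(2) using hh by auto
  then show ?thesis unfolding m_def .
qed

lemma lt_xor: "((a::nat) < b) \<noteq> (b < a) \<longleftrightarrow> a \<noteq> b" by auto

theorem parity:
  fixes h :: "'d \<Rightarrow> nat"
  assumes r: "resp S h" and S: "S \<subseteq> ME"
  shows "even (card {Ob\<in>XX. \<exists>d\<in>Ob. h d \<noteq> h (\<sigma> d)} + card {e\<in>S. \<exists>m\<in>e. h (\<sigma> m) \<noteq> h (\<sigma> (\<sigma> m))})"
proof -
  define I where "I = h ` (D - Mt)"
  have fI: "finite I" unfolding I_def using fin by simp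
  define cx where "cx i Ob = (of_bool (h (rep Ob) > i \<and> h (\<sigma> (rep Ob)) = i) + of_bool (h (\<sigma> (rep Ob)) > i \<and> h (rep Ob) = i) :: bit)" for i Ob
  define ce where "ce i e = (of_bool (e \<in> S) * (of_bool (h (\<sigma> (rep e)) > i \<and> h (\<sigma> (\<sigma> (rep e))) = i)
        + of_bool (h (\<sigma> (\<sigma> (rep e))) > i \<and> h (\<sigma> (rep e)) = i)) :: bit)" for i e
  have z: "(\<Sum>Ob\<in>XX. cx i Ob) + (\<Sum>e\<in>ME. ce i e) = 0" for i
    unfolding cx_def ce_def by (rule per_i[OF r])
  have "(\<Sum>i\<in>I. (\<Sum>Ob\<in>XX. cx i Ob) + (\<Sum>e\<in>ME. ce i e)) = 0"
    using z by simp
  then have "(\<Sum>i\<in>I. \<Sum>Ob\<in>XX. cx i Ob) + (\<Sum>i\<in>I. \<Sum>e\<in>ME. ce i e) = 0"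
    by (simp only: sum.distrib)
  then have Z: "(\<Sum>Ob\<in>XX. \<Sum>i\<in>I. cx i Ob) + (\<Sum>e\<in>ME. \<Sum>i\<in>I. ce i e) = 0"
    by (simp only: sum.swap[of _ I])
  have A: "(\<Sum>i\<in>I. cx i Ob) = of_bool (h (rep Ob) \<noteq> h (\<sigma> (rep Ob)))" if Ob: "Ob \<in> XX" for Ob
  proof -
    have x: "rep Ob \<in> D" "card (vorbit \<sigma> (rep Ob)) = 4" using X_elem[OF Ob] by auto
    note c = cross_props[OF x]
    have i1: "h (rep Ob) \<in> I" unfolding I_def using x(1) c(1) by blast
    have i2: "h (\<sigma> (rep Ob)) \<in> I" unfolding I_def using c(2,4) by blast
    have "(\<Sum>i\<in>I. cx i Ob) = (\<Sum>i\<in>I. of_bool (h (rep Ob) > i \<and> h (\<sigma> (rep Ob)) = i))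
        + (\<Sum>i\<in>I. of_bool (h (\<sigma> (rep Ob)) > i \<and> h (rep Ob) = i))"
      unfolding cx_def by (rule sum.distrib)
    also have "\<dots> = of_bool (h (\<sigma> (rep Ob)) < h (rep Ob)) + of_bool (h (rep Ob) < h (\<sigma> (rep Ob)))"
      using sum_gt_delta[OF fI i1] sum_gt_delta[OF fI i2] by simp
    also have "\<dots> = of_bool (h (rep Ob) \<noteq> h (\<sigma> (rep Ob)))"
      unfolding bit_ob_xor lt_xor by auto
    finally show ?thesis .
  qed
  have B: "(\<Sum>i\<in>I. ce i e) = of_bool (e \<in> S \<and> h (\<sigma> (rep e)) \<noteq> h (\<sigma> (\<sigma> (rep e))))" if e: "e \<in> ME" for e
  proof -
    have m: "rep e \<in> Mt" using ME_elem[OF e] by simp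
    note p = Mt_props[OF m]
    have i1: "h (\<sigma> (rep e)) \<in> I" unfolding I_def using p(2,4) by blast
    have i2: "h (\<sigma> (\<sigma> (rep e))) \<in> I" unfolding I_def using p(3,5) by blast
    have "(\<Sum>i\<in>I. ce i e) = of_bool (e \<in> S) * ((\<Sum>i\<in>I. of_bool (h (\<sigma> (rep e)) > i \<and> h (\<sigma> (\<sigma> (rep e))) = i))
        + (\<Sum>i\<in>I. of_bool (h (\<sigma> (\<sigma> (rep e))) > i \<and> h (\<sigma> (rep e)) = i)))"
      unfolding ce_def by (simp only: sum_distrib_left[symmetric] sum.distrib)
    also have "\<dots> = of_bool (e \<in> S) * (of_bool (h (\<sigma> (\<sigma> (rep e))) < h (\<sigma> (rep e))) + of_bool (h (\<sigma> (rep e)) < h (\<sigma> (\<sigma> (rep e)))))"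
      using sum_gt_delta[OF fI i1] sum_gt_delta[OF fI i2] by simp
    also have "\<dots> = of_bool (e \<in> S \<and> h (\<sigma> (rep e)) \<noteq> h (\<sigma> (\<sigma> (rep e))))"
      unfolding bit_ob_xor lt_xor by auto
    finally show ?thesis .
  qed
  have "(\<Sum>Ob\<in>XX. of_bool (h (rep Ob) \<noteq> h (\<sigma> (rep Ob)))) + (\<Sum>e\<in>ME. of_bool (e \<in> S \<and> h (\<sigma> (rep e)) \<noteq> h (\<sigma> (\<sigma> (rep e))))) = (0::bit)"
    using Z A B by simp
  then have "of_nat (card {Ob\<in>XX. h (rep Ob) \<noteq> h (\<sigma> (rep Ob))})
      + of_nat (card {e\<in>ME. e \<in> S \<and> h (\<sigma> (rep e)) \<noteq> h (\<sigma> (\<sigma> (rep e)))}) = (0::bit)"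
    unfolding bit_sum_card[OF X_fin] bit_sum_card[OF ME_fin] .
  moreover have "{Ob\<in>XX. h (rep Ob) \<noteq> h (\<sigma> (rep Ob))} = {Ob\<in>XX. \<exists>d\<in>Ob. h d \<noteq> h (\<sigma> d)}"
    using cross_diff[OF r] by blast
  moreover have "{e\<in>ME. e \<in> S \<and> h (\<sigma> (rep e)) \<noteq> h (\<sigma> (\<sigma> (rep e)))} = {e\<in>S. \<exists>m\<in>e. h (\<sigma> m) \<noteq> h (\<sigma> (\<sigma> m))}"
    using edge_diff[OF r] S by blast
  ultimately have "(of_nat (card {Ob\<in>XX. \<exists>d\<in>Ob. h d \<noteq> h (\<sigma> d)} + card {e\<in>S. \<exists>m\<in>e. h (\<sigma> m) \<noteq> h (\<sigma> (\<sigma> m))}) :: bit) = 0"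
    by simp
  then show ?thesis using bit_of_nat_even by blast
qed

end

lemma prod_of_bool:
  assumes "finite A"
  shows "(\<Prod>x\<in>A. (of_bool (P x) :: 'a::comm_semiring_1)) = of_bool (\<forall>x\<in>A. P x)"
  using assms by (induction rule: finite_induct) auto

lemma prod_pm:
  assumes "finite A"
  shows "(\<Prod>x\<in>A. (if P x then 1 else -1 :: int)) = (-1) ^ card {x\<in>A. \<not> P x}"
  using assms
proof (induction rule: finite_induct)
  case empty then show ?case by simp
next
  case (insert a A)
  have e: "{x\<in>insert a A. \<not> P x} = (if P a then {x\<in>A. \<not> P x} else insert a {x\<in>A. \<not> P x})" by auto
  have "a \<notin> {x\<in>A. \<not> P x}" using insert.hyps by simp
  moreover have "finite {x\<in>A. \<not> P x}" using insert.hyps by simp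
  ultimately show ?case using insert e by (simp add: card_insert_if)
qed

lemma sum_of_bool_int:
  assumes "finite A"
  shows "(\<Sum>x\<in>A. (of_bool (P x) :: int)) = int (card {x\<in>A. P x})"
proof -
  have "(\<Sum>x\<in>A. (of_bool (P x) :: int)) = (\<Sum>x\<in>A. if P x then 1 else 0)" by (simp add: of_bool_def)
  also have "\<dots> = (\<Sum>x\<in>{x\<in>A. P x}. 1)" using sum.inter_filter[OF assms, of "\<lambda>_. (1::int)" P] by simp
  finally show ?thesis by simp
qed

lemma edge_val:
  fixes a b c d :: nat
  shows "(if (a \<noteq> b \<or> c \<noteq> d) then 1 else -1) * of_bool (c = a \<and> d = b) + of_bool (d = a \<and> c = b)
     = (of_bool ((a \<noteq> b \<or> c \<noteq> d) \<and> ((c = a \<and> d = b) \<or> (d = a \<and> c = b))) :: int)"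
  by auto

lemma edge_val2:
  fixes a b c d :: nat
  assumes "a \<noteq> b"
  shows "of_bool (c = a \<and> d = b) + of_bool (d = a \<and> c = b)
     = (of_bool ((c = a \<and> d = b) \<or> (d = a \<and> c = b)) :: int)"
  using assms by auto

lemma even_pow:
  assumes "even (a + b)"
  shows "((-1::int) ^ a) = (-1) ^ b"
proof -
  have "even a \<longleftrightarrow> even b" using assms by simp
  then show ?thesis by (simp add: minus_one_power_iff)
qed

lemma quot_fun_card_pred:
  fixes A :: "'a set" and B :: "'b set"
  assumes "finite A" "L \<subseteq> A \<times> A"
  shows "card {g\<in>A // conn L \<rightarrow>\<^sub>E B. Q (\<lambda>x\<in>A. g (conn L `` {x}))}
       = card {h\<in>A \<rightarrow>\<^sub>E B. (\<forall>(x,y)\<in>L. h x = h y) \<and> Q h}"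
proof -
  let ?R = "conn L \<inter> A \<times> A"
  have eqv: "equiv A ?R" by (rule conn_equiv[OF assms(2)])
  have q: "A // conn L = A // ?R" by (rule conn_quot[OF assms(2)])
  have im: "(\<lambda>x\<in>A. g (conn L `` {x})) = (\<lambda>x\<in>A. g (?R `` {x}))" for g
    using conn_image[OF assms(2)] by (intro restrict_ext) simp
  have bij: "bij_betw (\<lambda>g. \<lambda>x\<in>A. g (?R``{x})) {g\<in>A//?R \<rightarrow>\<^sub>E B. Q (\<lambda>x\<in>A. g (?R``{x}))}
           {h\<in>{h\<in>A \<rightarrow>\<^sub>E B. \<forall>x\<in>A. \<forall>y\<in>A. (x,y)\<in>?R \<longrightarrow> h x = h y}. Q h}"
    using bij_betw_restrict_pred[OF quot_fun_bij[OF eqv, of B], of Q] by simp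
  have s: "{h\<in>{h\<in>A \<rightarrow>\<^sub>E B. \<forall>x\<in>A. \<forall>y\<in>A. (x,y)\<in>?R \<longrightarrow> h x = h y}. Q h}
         = {h\<in>A \<rightarrow>\<^sub>E B. (\<forall>(x,y)\<in>L. h x = h y) \<and> Q h}"
  proof (rule Collect_cong)
    fix h :: "'a \<Rightarrow> 'b"
    have "(\<forall>x\<in>A. \<forall>y\<in>A. (x,y)\<in>?R \<longrightarrow> h x = h y) \<longleftrightarrow> (\<forall>(x,y)\<in>L. h x = h y)"
    proof
      assume H: "\<forall>x\<in>A. \<forall>y\<in>A. (x,y)\<in>?R \<longrightarrow> h x = h y"
      show "\<forall>(x,y)\<in>L. h x = h y"
      proof (clarify)
        fix x y assume xy: "(x,y) \<in> L"
        have "(x,y) \<in> A \<times> A" using assms(2) xy by (rule subsetD)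
        moreover have "(x,y) \<in> conn L" using xy by (rule conn_base)
        ultimately show "h x = h y" using H by blast
      qed
    next
      assume H: "\<forall>(x,y)\<in>L. h x = h y"
      show "\<forall>x\<in>A. \<forall>y\<in>A. (x,y)\<in>?R \<longrightarrow> h x = h y"
      proof (intro ballI impI)
        fix x y assume "(x,y) \<in> ?R"
        then have "(x,y) \<in> conn L" by blast
        then show "h x = h y" using conn_resp[OF H] by blast
      qed
    qed
    then show "(h \<in> {h\<in>A \<rightarrow>\<^sub>E B. \<forall>x\<in>A. \<forall>y\<in>A. (x,y)\<in>?R \<longrightarrow> h x = h y} \<and> Q h) =
          (h \<in> A \<rightarrow>\<^sub>E B \<and> (\<forall>(x,y)\<in>L. h x = h y) \<and> Q h)" by simp
  qed
  have "card {g\<in>A // conn L \<rightarrow>\<^sub>E B. Q (\<lambda>x\<in>A. g (conn L `` {x}))}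
      = card {g\<in>A//?R \<rightarrow>\<^sub>E B. Q (\<lambda>x\<in>A. g (?R``{x}))}"
    unfolding q im ..
  also have "\<dots> = card {h\<in>{h\<in>A \<rightarrow>\<^sub>E B. \<forall>x\<in>A. \<forall>y\<in>A. (x,y)\<in>?R \<longrightarrow> h x = h y}. Q h}"
    by (rule bij_betw_same_card[OF bij])
  finally show ?thesis unfolding s .
qed

context pmd
begin

abbreviation "NM \<equiv> nm_darts D Mt"

lemma NM_eq: "NM = D - Mt" unfolding nm_darts_def ..

definition SL where "SL S T = state_links D \<alpha> \<sigma> Mt S T"

definition Tl where "Tl T = {(d, \<sigma> d) | d. d \<in> D \<and> vorbit \<sigma> d \<in> T}"

lemma SL_split: "SL S T = links S \<union> Tl T"
  unfolding SL_def links_def state_links_def Tl_def by blast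

lemma links_cases:
  assumes "(x,y) \<in> links S"
  obtains (a) d where "x = d" "y = \<alpha> d" "d \<in> D" "d \<notin> Mt"
      | (c) d where "x = d" "y = \<sigma> (\<sigma> d)" "d \<in> D" "card (vorbit \<sigma> d) = 4"
      | (s1) m where "x = \<sigma> m" "y = \<sigma> (\<alpha> m)" "m \<in> Mt" "{m, \<alpha> m} \<in> S"
      | (s2) m where "x = \<sigma> (\<sigma> m)" "y = \<sigma> (\<sigma> (\<alpha> m))" "m \<in> Mt" "{m, \<alpha> m} \<in> S"
      | (z1) m where "x = \<sigma> m" "y = \<sigma> (\<sigma> (\<alpha> m))" "m \<in> Mt" "{m, \<alpha> m} \<notin> S"
      | (z2) m where "x = \<sigma> (\<sigma> m)" "y = \<sigma> (\<alpha> m)" "m \<in> Mt" "{m, \<alpha> m} \<notin> S"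
  using assms unfolding links_def state_links_def nm_darts_def by blast

lemma links_sub: "links S \<subseteq> NM \<times> NM"
proof (rule subsetI)
  fix p assume p: "p \<in> links S"
  obtain x y where xy: "p = (x,y)" by (cases p)
  have "x \<in> D - Mt \<and> y \<in> D - Mt" using p unfolding xy
  proof (cases rule: links_cases)
    case (a d) then show ?thesis using a_in a_nm by blast
  next
    case (c d) then show ?thesis using cross_props[of d] by blast
  next
    case (s1 m) then show ?thesis using Mt_props[of m] Mt_props[of "\<alpha> m"] Mt_a[of m] by blast
  next
    case (s2 m) then show ?thesis using Mt_props[of m] Mt_props[of "\<alpha> m"] Mt_a[of m] by blast
  next
    case (z1 m) then show ?thesis using Mt_props[of m] Mt_props[of "\<alpha> m"] Mt_a[of m] by blast
  next
    case (z2 m) then show ?thesis using Mt_props[of m] Mt_props[of "\<alpha> m"] Mt_a[of m] by blast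
  qed
  then show "p \<in> NM \<times> NM" unfolding xy NM_eq by blast
qed

lemma Tl_sub: "T \<subseteq> XX \<Longrightarrow> Tl T \<subseteq> NM \<times> NM"
proof
  fix p assume T: "T \<subseteq> XX" and p: "p \<in> Tl T"
  then obtain d where d: "p = (d, \<sigma> d)" "d \<in> D" "vorbit \<sigma> d \<in> T" unfolding Tl_def by blast
  have "card (vorbit \<sigma> d) = 4" using X_elem(2,3) T d(3) by (metis subsetD)
  then show "p \<in> NM \<times> NM" using cross_props[OF d(2)] d(1,2) unfolding NM_eq by blast
qed

lemma resp_iff_base:
  fixes h :: "'d \<Rightarrow> nat"
  shows "resp S h \<longleftrightarrow>
    ((\<forall>d\<in>D. d \<notin> Mt \<longrightarrow> h (\<alpha> d) = h d) \<and> (\<forall>d\<in>D. card (vorbit \<sigma> d) = 4 \<longrightarrow> h (\<sigma> (\<sigma> d)) = h d)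
     \<and> (\<forall>m\<in>Mt. {m, \<alpha> m} \<in> S \<longrightarrow> h (\<sigma> (\<alpha> m)) = h (\<sigma> m) \<and> h (\<sigma> (\<sigma> (\<alpha> m))) = h (\<sigma> (\<sigma> m)))
     \<and> (\<forall>m\<in>Mt. {m, \<alpha> m} \<notin> S \<longrightarrow> h (\<sigma> (\<sigma> (\<alpha> m))) = h (\<sigma> m) \<and> h (\<sigma> (\<alpha> m)) = h (\<sigma> (\<sigma> m))))"
  (is "_ \<longleftrightarrow> ?B")
proof
  assume "resp S h"
  then show ?B using resp_D[of S h] by blast
next
  assume B: ?B
  show "resp S h" unfolding resp_def
  proof (clarify)
    fix x y assume "(x,y) \<in> links S"
    then show "h x = h y"
    proof (cases rule: links_cases)
      case a then show ?thesis using B by simp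
    next
      case c then show ?thesis using B by simp
    next
      case s1 then show ?thesis using B by simp
    next
      case s2 then show ?thesis using B by simp
    next
      case z1 then show ?thesis using B by simp
    next
      case z2 then show ?thesis using B by simp
    qed
  qed
qed

end

lemma pow_card_split:
  assumes "finite S"
  shows "(-1::int) ^ card S * (-1) ^ card {e\<in>S. P e} = (-1) ^ card {e\<in>S. \<not> P e}"
proof -
  have "S = {e\<in>S. P e} \<union> {e\<in>S. \<not> P e}" by blast
  then have "card S = card {e\<in>S. P e} + card {e\<in>S. \<not> P e}"
    using assms by (metis (no_types, lifting) card_Un_disjoint disjoint_iff finite_Un mem_Collect_eq)
  then have ex: "card S + card {e\<in>S. P e} = card {e\<in>S. \<not> P e} + 2 * card {e\<in>S. P e}" by simp
  have "(-1::int) ^ card S * (-1) ^ card {e\<in>S. P e} = (-1) ^ (card S + card {e\<in>S. P e})"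
    by (simp add: power_add)
  also have "\<dots> = (-1) ^ (card {e\<in>S. \<not> P e} + 2 * card {e\<in>S. P e})" unfolding ex ..
  also have "\<dots> = (-1) ^ card {e\<in>S. \<not> P e}" by (simp add: power_add power_mult)
  finally show ?thesis .
qed

context pmd
begin

definition eqO where "eqO (h::'d \<Rightarrow> nat) Ob \<longleftrightarrow> (\<forall>d\<in>Ob. h d = h (\<sigma> d))"
definition base where "base (h::'d \<Rightarrow> nat) \<longleftrightarrow> (\<forall>d\<in>D. d \<notin> Mt \<longrightarrow> h (\<alpha> d) = h d) \<and> (\<forall>d\<in>D. card (vorbit \<sigma> d) = 4 \<longrightarrow> h (\<sigma> (\<sigma> d)) = h d)"
definition one where "one e (h::'d \<Rightarrow> nat) \<longleftrightarrow> (\<forall>m\<in>e. h (\<sigma> (\<alpha> m)) = h (\<sigma> m) \<and> h (\<sigma> (\<sigma> (\<alpha> m))) = h (\<sigma> (\<sigma> m)))"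
definition zero where "zero e (h::'d \<Rightarrow> nat) \<longleftrightarrow> (\<forall>m\<in>e. h (\<sigma> (\<sigma> (\<alpha> m))) = h (\<sigma> m) \<and> h (\<sigma> (\<alpha> m)) = h (\<sigma> (\<sigma> m)))"
definition de where "de e (h::'d \<Rightarrow> nat) \<longleftrightarrow> (\<exists>m\<in>e. h (\<sigma> m) \<noteq> h (\<sigma> (\<sigma> m)))"

lemma ME_mem:
  assumes "e \<in> ME" "m \<in> e"
  shows "m \<in> Mt" "{m, \<alpha> m} = e"
proof -
  obtain r where r: "r \<in> Mt" "e = {r, \<alpha> r}" using assms(1) unfolding match_edges_def by blast
  have ar: "\<alpha> r \<in> Mt" "\<alpha> (\<alpha> r) = r" using Mt_a[OF r(1)] a_inv[OF Mt_D[OF r(1)]] by auto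
  have "m = r \<or> m = \<alpha> r" using assms(2) r(2) by simp
  then show "m \<in> Mt" "{m, \<alpha> m} = e" using r ar by (auto simp: insert_commute)
qed

lemma resp_T:
  fixes h :: "'d \<Rightarrow> nat"
  assumes T: "T \<subseteq> XX"
  shows "(\<forall>(x,y)\<in>SL S T. h x = h y) \<longleftrightarrow> resp S h \<and> (\<forall>Ob\<in>T. eqO h Ob)"
proof -
  have "(\<forall>(x,y)\<in>Tl T. h x = h y) \<longleftrightarrow> (\<forall>Ob\<in>T. eqO h Ob)"
  proof
    assume H: "\<forall>(x,y)\<in>Tl T. h x = h y"
    show "\<forall>Ob\<in>T. eqO h Ob" unfolding eqO_def
    proof (intro ballI)
      fix Ob d assume Ob: "Ob \<in> T" and d: "d \<in> Ob"
      have ObX: "Ob \<in> XX" using Ob T by blast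
      have r: "rep Ob \<in> D" "vorbit \<sigma> (rep Ob) = Ob" using X_elem[OF ObX] by auto
      have dv: "d \<in> vorbit \<sigma> (rep Ob)" using d r(2) by simp
      have "d \<in> D" "vorbit \<sigma> d = Ob" using orbit_same[OF r(1) dv] r(2) by auto
      then have "(d, \<sigma> d) \<in> Tl T" unfolding Tl_def using Ob by blast
      then show "h d = h (\<sigma> d)" using H by blast
    qed
  next
    assume H: "\<forall>Ob\<in>T. eqO h Ob"
    show "\<forall>(x,y)\<in>Tl T. h x = h y"
    proof (clarify)
      fix x y assume "(x,y) \<in> Tl T"
      then obtain d where d: "x = d" "y = \<sigma> d" "d \<in> D" "vorbit \<sigma> d \<in> T" unfolding Tl_def by blast
      have "eqO h (vorbit \<sigma> d)" using H d(4) by blast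
      then show "h x = h y" unfolding eqO_def using d vorbit_self[of d \<sigma>] by blast
    qed
  qed
  moreover have "(\<forall>(x,y)\<in>SL S T. h x = h y) \<longleftrightarrow> resp S h \<and> (\<forall>(x,y)\<in>Tl T. h x = h y)"
    unfolding SL_split resp_def by blast
  ultimately show ?thesis by simp
qed

lemma resp_S:
  fixes h :: "'d \<Rightarrow> nat"
  assumes S: "S \<subseteq> ME"
  shows "resp S h \<longleftrightarrow> base h \<and> (\<forall>e\<in>S. one e h) \<and> (\<forall>e\<in>ME - S. zero e h)"
proof -
  have A: "(\<forall>m\<in>Mt. {m, \<alpha> m} \<in> S \<longrightarrow> h (\<sigma> (\<alpha> m)) = h (\<sigma> m) \<and> h (\<sigma> (\<sigma> (\<alpha> m))) = h (\<sigma> (\<sigma> m)))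
     \<longleftrightarrow> (\<forall>e\<in>S. one e h)"
  proof
    assume H: "\<forall>m\<in>Mt. {m, \<alpha> m} \<in> S \<longrightarrow> h (\<sigma> (\<alpha> m)) = h (\<sigma> m) \<and> h (\<sigma> (\<sigma> (\<alpha> m))) = h (\<sigma> (\<sigma> m))"
    show "\<forall>e\<in>S. one e h" unfolding one_def
    proof (intro ballI)
      fix e m assume e: "e \<in> S" and m: "m \<in> e"
      have eM: "e \<in> ME" using e S by blast
      have "m \<in> Mt" "{m, \<alpha> m} \<in> S" using ME_mem[OF eM m] e by auto
      then show "h (\<sigma> (\<alpha> m)) = h (\<sigma> m) \<and> h (\<sigma> (\<sigma> (\<alpha> m))) = h (\<sigma> (\<sigma> m))" using H by blast
    qed
  next
    assume H: "\<forall>e\<in>S. one e h"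
    show "\<forall>m\<in>Mt. {m, \<alpha> m} \<in> S \<longrightarrow> h (\<sigma> (\<alpha> m)) = h (\<sigma> m) \<and> h (\<sigma> (\<sigma> (\<alpha> m))) = h (\<sigma> (\<sigma> m))"
    proof (intro ballI impI)
      fix m assume "m \<in> Mt" "{m, \<alpha> m} \<in> S"
      then have "one {m, \<alpha> m} h" using H by blast
      then show "h (\<sigma> (\<alpha> m)) = h (\<sigma> m) \<and> h (\<sigma> (\<sigma> (\<alpha> m))) = h (\<sigma> (\<sigma> m))" unfolding one_def by blast
    qed
  qed
  have B: "(\<forall>m\<in>Mt. {m, \<alpha> m} \<notin> S \<longrightarrow> h (\<sigma> (\<sigma> (\<alpha> m))) = h (\<sigma> m) \<and> h (\<sigma> (\<alpha> m)) = h (\<sigma> (\<sigma> m)))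
     \<longleftrightarrow> (\<forall>e\<in>ME - S. zero e h)"
  proof
    assume H: "\<forall>m\<in>Mt. {m, \<alpha> m} \<notin> S \<longrightarrow> h (\<sigma> (\<sigma> (\<alpha> m))) = h (\<sigma> m) \<and> h (\<sigma> (\<alpha> m)) = h (\<sigma> (\<sigma> m))"
    show "\<forall>e\<in>ME - S. zero e h" unfolding zero_def
    proof (intro ballI)
      fix e m assume e: "e \<in> ME - S" and m: "m \<in> e"
      have eM: "e \<in> ME" using e by blast
      have "m \<in> Mt" "{m, \<alpha> m} \<notin> S" using ME_mem[OF eM m] e by auto
      then show "h (\<sigma> (\<sigma> (\<alpha> m))) = h (\<sigma> m) \<and> h (\<sigma> (\<alpha> m)) = h (\<sigma> (\<sigma> m))" using H by blast
    qed
  next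
    assume H: "\<forall>e\<in>ME - S. zero e h"
    show "\<forall>m\<in>Mt. {m, \<alpha> m} \<notin> S \<longrightarrow> h (\<sigma> (\<sigma> (\<alpha> m))) = h (\<sigma> m) \<and> h (\<sigma> (\<alpha> m)) = h (\<sigma> (\<sigma> m))"
    proof (intro ballI impI)
      fix m assume m: "m \<in> Mt" "{m, \<alpha> m} \<notin> S"
      have "{m, \<alpha> m} \<in> ME" unfolding match_edges_def using m(1) by blast
      then have "zero {m, \<alpha> m} h" using H m(2) by blast
      then show "h (\<sigma> (\<sigma> (\<alpha> m))) = h (\<sigma> m) \<and> h (\<sigma> (\<alpha> m)) = h (\<sigma> (\<sigma> m))" unfolding zero_def by blast
    qed
  qed
  show ?thesis unfolding resp_iff_base A B base_def by blast
qed

lemma edge_forms: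
  fixes h :: "'d \<Rightarrow> nat"
  assumes e: "e \<in> ME"
  shows "one e h \<longleftrightarrow> h (\<sigma> (\<alpha> (rep e))) = h (\<sigma> (rep e)) \<and> h (\<sigma> (\<sigma> (\<alpha> (rep e)))) = h (\<sigma> (\<sigma> (rep e)))"
    "zero e h \<longleftrightarrow> h (\<sigma> (\<sigma> (\<alpha> (rep e)))) = h (\<sigma> (rep e)) \<and> h (\<sigma> (\<alpha> (rep e))) = h (\<sigma> (\<sigma> (rep e)))"
    "de e h \<longleftrightarrow> h (\<sigma> (rep e)) \<noteq> h (\<sigma> (\<sigma> (rep e))) \<or> h (\<sigma> (\<alpha> (rep e))) \<noteq> h (\<sigma> (\<sigma> (\<alpha> (rep e))))"
proof -
  define r where "r = rep e"
  have r: "r \<in> Mt" "e = {r, \<alpha> r}" using ME_elem[OF e] unfolding r_def by auto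
  have aa: "\<alpha> (\<alpha> r) = r" using a_inv[OF Mt_D[OF r(1)]] .
  have "one e h \<longleftrightarrow> h (\<sigma> (\<alpha> r)) = h (\<sigma> r) \<and> h (\<sigma> (\<sigma> (\<alpha> r))) = h (\<sigma> (\<sigma> r))"
    unfolding one_def r(2) using aa by auto
  then show "one e h \<longleftrightarrow> h (\<sigma> (\<alpha> (rep e))) = h (\<sigma> (rep e)) \<and> h (\<sigma> (\<sigma> (\<alpha> (rep e)))) = h (\<sigma> (\<sigma> (rep e)))"
    unfolding r_def .
  have "zero e h \<longleftrightarrow> h (\<sigma> (\<sigma> (\<alpha> r))) = h (\<sigma> r) \<and> h (\<sigma> (\<alpha> r)) = h (\<sigma> (\<sigma> r))"
    unfolding zero_def r(2) using aa by auto
  then show "zero e h \<longleftrightarrow> h (\<sigma> (\<sigma> (\<alpha> (rep e)))) = h (\<sigma> (rep e)) \<and> h (\<sigma> (\<alpha> (rep e))) = h (\<sigma> (\<sigma> (rep e)))"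
    unfolding r_def .
  have "de e h \<longleftrightarrow> h (\<sigma> r) \<noteq> h (\<sigma> (\<sigma> r)) \<or> h (\<sigma> (\<alpha> r)) \<noteq> h (\<sigma> (\<sigma> (\<alpha> r)))"
    unfolding de_def r(2) by auto
  then show "de e h \<longleftrightarrow> h (\<sigma> (rep e)) \<noteq> h (\<sigma> (\<sigma> (rep e))) \<or> h (\<sigma> (\<alpha> (rep e))) \<noteq> h (\<sigma> (\<sigma> (\<alpha> (rep e))))"
    unfolding r_def .
qed

end

context pmd
begin

abbreviation "Hs n \<equiv> NM \<rightarrow>\<^sub>E {1..n::nat}"

lemma finNM: "finite NM" unfolding NM_eq using fin by simp

lemma Hs_fin: "finite (Hs n)" using finNM by (simp add: finite_PiE)

lemma SL_sub: "T \<subseteq> XX \<Longrightarrow> SL S T \<subseteq> NM \<times> NM"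
  unfolding SL_split using links_sub Tl_sub by blast

lemma ncomp_pow:
  assumes T: "T \<subseteq> XX"
  shows "int n ^ ncomp D \<alpha> \<sigma> Mt S T = (\<Sum>h\<in>Hs n. of_bool (resp S h \<and> (\<forall>Ob\<in>T. eqO h Ob)))"
proof -
  have c: "card {h\<in>Hs n. \<forall>(x,y)\<in>SL S T. h x = h y} = card {1..n} ^ card (NM // conn (SL S T))"
    by (rule conn_fun_card[OF finNM SL_sub[OF T]])
  have s: "{h\<in>Hs n. \<forall>(x,y)\<in>SL S T. h x = h y} = {h\<in>Hs n. resp S h \<and> (\<forall>Ob\<in>T. eqO h Ob)}"
    using resp_T[OF T] by blast
  have "int n ^ ncomp D \<alpha> \<sigma> Mt S T = int (n ^ card (NM // conn (SL S T)))"
    unfolding ncomp_def SL_def by simp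
  also have "\<dots> = int (card {h\<in>Hs n. resp S h \<and> (\<forall>Ob\<in>T. eqO h Ob)})" using c s by simp
  also have "\<dots> = (\<Sum>h\<in>Hs n. of_bool (resp S h \<and> (\<forall>Ob\<in>T. eqO h Ob)))"
    using sum_of_bool_int[OF Hs_fin, of "\<lambda>h. resp S h \<and> (\<forall>Ob\<in>T. eqO h Ob)", of n] by simp
  finally show ?thesis .
qed

lemma T_sum:
  fixes h :: "'d \<Rightarrow> nat"
  shows "(\<Sum>T\<in>Pow XX. 2 ^ card T * (-1) ^ card (XX - T) * of_bool (\<forall>Ob\<in>T. eqO h Ob))
     = ((-1::int) ^ card {Ob\<in>XX. \<not> eqO h Ob})"
proof -
  have "(\<Prod>Ob\<in>XX. 2 * of_bool (eqO h Ob) + (-1::int))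
     = (\<Sum>X\<in>Pow XX. (\<Prod>Ob\<in>X. 2 * of_bool (eqO h Ob)) * (\<Prod>Ob\<in>XX - X. -1))"
    by (rule prod_add[OF X_fin])
  also have "\<dots> = (\<Sum>T\<in>Pow XX. 2 ^ card T * (-1) ^ card (XX - T) * of_bool (\<forall>Ob\<in>T. eqO h Ob))"
  proof (rule sum.cong[OF refl])
    fix X assume "X \<in> Pow XX"
    then have fX: "finite X" using X_fin finite_subset by blast
    have "(\<Prod>Ob\<in>X. 2 * (of_bool (eqO h Ob) :: int)) = 2 ^ card X * of_bool (\<forall>Ob\<in>X. eqO h Ob)"
      by (simp add: prod.distrib prod_of_bool[OF fX])
    then show "(\<Prod>Ob\<in>X. 2 * of_bool (eqO h Ob)) * (\<Prod>Ob\<in>XX - X. -1)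
        = 2 ^ card X * (-1) ^ card (XX - X) * (of_bool (\<forall>Ob\<in>X. eqO h Ob) :: int)"
      by simp
  qed
  finally have 1: "(\<Prod>Ob\<in>XX. 2 * of_bool (eqO h Ob) + (-1::int))
     = (\<Sum>T\<in>Pow XX. 2 ^ card T * (-1) ^ card (XX - T) * of_bool (\<forall>Ob\<in>T. eqO h Ob))" .
  have "(\<Prod>Ob\<in>XX. 2 * of_bool (eqO h Ob) + (-1::int)) = (\<Prod>Ob\<in>XX. if eqO h Ob then 1 else -1)"
    by (rule prod.cong[OF refl]) simp
  also have "\<dots> = (-1) ^ card {Ob\<in>XX. \<not> eqO h Ob}" by (rule prod_pm[OF X_fin])
  finally show ?thesis using 1 by simp
qed

definition f1 where "f1 h e = (if de e h then 1 else -1) * (of_bool (one e h) :: int)"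
definition f0 where "f0 h e = (of_bool (zero e h) :: int)"

lemma S_term:
  fixes h :: "'d \<Rightarrow> nat"
  assumes S: "S \<subseteq> ME"
  shows "(-1) ^ card S * of_bool (resp S h) * (-1) ^ card {Ob\<in>XX. \<not> eqO h Ob}
     = of_bool (base h) * ((\<Prod>e\<in>S. f1 h e) * (\<Prod>e\<in>ME - S. f0 h e))"
proof -
  have fS: "finite S" using S ME_fin finite_subset by blast
  have fS2: "finite (ME - S)" using ME_fin by simp
  have p1: "(\<Prod>e\<in>S. f1 h e) = (-1) ^ card {e\<in>S. \<not> de e h} * of_bool (\<forall>e\<in>S. one e h)"
    unfolding f1_def prod.distrib prod_pm[OF fS] prod_of_bool[OF fS] ..
  have p0: "(\<Prod>e\<in>ME - S. f0 h e) = of_bool (\<forall>e\<in>ME - S. zero e h)"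
    unfolding f0_def prod_of_bool[OF fS2] ..
  show ?thesis
  proof (cases "resp S h")
    case True
    have b: "base h" "\<forall>e\<in>S. one e h" "\<forall>e\<in>ME - S. zero e h" using True resp_S[OF S] by auto
    have ev: "even (card {Ob\<in>XX. \<exists>d\<in>Ob. h d \<noteq> h (\<sigma> d)} + card {e\<in>S. \<exists>m\<in>e. h (\<sigma> m) \<noteq> h (\<sigma> (\<sigma> m))})"
      by (rule parity[OF True S])
    have e1: "{Ob\<in>XX. \<not> eqO h Ob} = {Ob\<in>XX. \<exists>d\<in>Ob. h d \<noteq> h (\<sigma> d)}" unfolding eqO_def by blast
    have e2: "{e\<in>S. \<exists>m\<in>e. h (\<sigma> m) \<noteq> h (\<sigma> (\<sigma> m))} = {e\<in>S. de e h}" unfolding de_def ..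
    have "(-1::int) ^ card {Ob\<in>XX. \<not> eqO h Ob} = (-1) ^ card {e\<in>S. de e h}"
      unfolding e1 e2[symmetric] by (rule even_pow[OF ev])
    then have "(-1) ^ card S * of_bool (resp S h) * (-1) ^ card {Ob\<in>XX. \<not> eqO h Ob}
        = (-1::int) ^ card S * (-1) ^ card {e\<in>S. de e h}" using True by simp
    also have "\<dots> = (-1) ^ card {e\<in>S. \<not> de e h}" by (rule pow_card_split[OF fS])
    finally show ?thesis using p1 p0 b by simp
  next
    case False
    then have "\<not> (base h \<and> (\<forall>e\<in>S. one e h) \<and> (\<forall>e\<in>ME - S. zero e h))" using resp_S[OF S] by simp
    then show ?thesis using False p1 p0 by auto
  qed
qed

lemma f_sum:
  fixes h :: "'d \<Rightarrow> nat"
  assumes e: "e \<in> ME"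
  shows "f1 h e + f0 h e = of_bool (de e h \<and> (one e h \<or> zero e h))"
  unfolding f1_def f0_def edge_forms[OF e] by (rule edge_val)

lemma pk_eq:
  "pk_bracket D \<alpha> \<sigma> Mt n = (\<Sum>h\<in>Hs n. of_bool (base h) * of_bool (\<forall>e\<in>ME. de e h \<and> (one e h \<or> zero e h)))"
proof -
  have "pk_bracket D \<alpha> \<sigma> Mt n = (\<Sum>S\<in>Pow ME. \<Sum>T\<in>Pow XX.
      (-1) ^ card S * 2 ^ card T * (-1) ^ card (XX - T) * (\<Sum>h\<in>Hs n. of_bool (resp S h \<and> (\<forall>Ob\<in>T. eqO h Ob))))"
    unfolding pk_bracket_def
    by (intro sum.cong refl) (simp add: ncomp_pow)
  also have "\<dots> = (\<Sum>S\<in>Pow ME. \<Sum>h\<in>Hs n. \<Sum>T\<in>Pow XX.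
      (-1) ^ card S * 2 ^ card T * (-1) ^ card (XX - T) * of_bool (resp S h \<and> (\<forall>Ob\<in>T. eqO h Ob)))"
    by (intro sum.cong refl) (simp add: sum_distrib_left sum.swap[of _ "Pow XX"])
  also have "\<dots> = (\<Sum>S\<in>Pow ME. \<Sum>h\<in>Hs n. (-1) ^ card S * of_bool (resp S h) * (-1) ^ card {Ob\<in>XX. \<not> eqO h Ob})"
  proof (intro sum.cong refl)
    fix S and h :: "'d \<Rightarrow> nat"
    have "(\<Sum>T\<in>Pow XX. (-1::int) ^ card S * 2 ^ card T * (-1) ^ card (XX - T) * of_bool (resp S h \<and> (\<forall>Ob\<in>T. eqO h Ob)))
      = (-1) ^ card S * of_bool (resp S h) * (\<Sum>T\<in>Pow XX. 2 ^ card T * (-1) ^ card (XX - T) * of_bool (\<forall>Ob\<in>T. eqO h Ob))"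
      by (simp add: sum_distrib_left mult.assoc mult.left_commute)
    also have "\<dots> = (-1) ^ card S * of_bool (resp S h) * (-1) ^ card {Ob\<in>XX. \<not> eqO h Ob}"
      unfolding T_sum ..
    finally show "(\<Sum>T\<in>Pow XX. (-1::int) ^ card S * 2 ^ card T * (-1) ^ card (XX - T) * of_bool (resp S h \<and> (\<forall>Ob\<in>T. eqO h Ob)))
      = (-1) ^ card S * of_bool (resp S h) * (-1) ^ card {Ob\<in>XX. \<not> eqO h Ob}" .
  qed
  also have "\<dots> = (\<Sum>h\<in>Hs n. \<Sum>S\<in>Pow ME. (-1) ^ card S * of_bool (resp S h) * (-1) ^ card {Ob\<in>XX. \<not> eqO h Ob})"
    by (rule sum.swap)
  also have "\<dots> = (\<Sum>h\<in>Hs n. \<Sum>S\<in>Pow ME. of_bool (base h) * ((\<Prod>e\<in>S. f1 h e) * (\<Prod>e\<in>ME - S. f0 h e)))"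
    by (intro sum.cong refl) (rule S_term, blast)
  also have "\<dots> = (\<Sum>h\<in>Hs n. of_bool (base h) * (\<Prod>e\<in>ME. f1 h e + f0 h e))"
    by (intro sum.cong refl) (simp add: sum_distrib_left[symmetric] prod_add[OF ME_fin])
  also have "\<dots> = (\<Sum>h\<in>Hs n. of_bool (base h) * of_bool (\<forall>e\<in>ME. de e h \<and> (one e h \<or> zero e h)))"
  proof (intro sum.cong refl)
    fix h :: "'d \<Rightarrow> nat"
    have "(\<Prod>e\<in>ME. f1 h e + f0 h e) = (\<Prod>e\<in>ME. (of_bool (de e h \<and> (one e h \<or> zero e h)) :: int))"
      by (rule prod.cong[OF refl]) (rule f_sum)
    also have "\<dots> = of_bool (\<forall>e\<in>ME. de e h \<and> (one e h \<or> zero e h))" by (rule prod_of_bool[OF ME_fin])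
    finally show "of_bool (base h) * (\<Prod>e\<in>ME. f1 h e + f0 h e) = of_bool (base h) * of_bool (\<forall>e\<in>ME. de e h \<and> (one e h \<or> zero e h))"
      by simp
  qed
  finally show ?thesis .
qed

end

context pmd
begin

definition alld where "alld (h::'d \<Rightarrow> nat) \<longleftrightarrow> (\<forall>m\<in>Mt. h (\<sigma> m) \<noteq> h (\<sigma> (\<sigma> m)))"

lemma sc_eq:
  "state_colorings D \<alpha> \<sigma> Mt S n = card {h\<in>Hs n. resp S h \<and> alld h}"
proof -
  let ?R = "conn (links S)"
  have s: "{g \<in> NM // ?R \<rightarrow>\<^sub>E {1..n}. \<forall>m\<in>Mt. g (?R `` {\<sigma> m}) \<noteq> g (?R `` {\<sigma> (\<sigma> m)})}
     = {g \<in> NM // ?R \<rightarrow>\<^sub>E {1..n}. alld (\<lambda>x\<in>NM. g (?R `` {x}))}"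
  proof (rule Collect_cong)
    fix g
    have "(\<forall>m\<in>Mt. g (?R `` {\<sigma> m}) \<noteq> g (?R `` {\<sigma> (\<sigma> m)})) \<longleftrightarrow> alld (\<lambda>x\<in>NM. g (?R `` {x}))"
    proof -
      have "\<sigma> m \<in> NM" "\<sigma> (\<sigma> m) \<in> NM" if "m \<in> Mt" for m
        using Mt_props[OF that] unfolding NM_eq by auto
      then show ?thesis unfolding alld_def by auto
    qed
    then show "(g \<in> NM // ?R \<rightarrow>\<^sub>E {1..n} \<and> (\<forall>m\<in>Mt. g (?R `` {\<sigma> m}) \<noteq> g (?R `` {\<sigma> (\<sigma> m)}))) =
      (g \<in> NM // ?R \<rightarrow>\<^sub>E {1..n} \<and> alld (\<lambda>x\<in>NM. g (?R `` {x})))" by simp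
  qed
  have "state_colorings D \<alpha> \<sigma> Mt S n = card {g \<in> NM // ?R \<rightarrow>\<^sub>E {1..n}. \<forall>m\<in>Mt. g (?R `` {\<sigma> m}) \<noteq> g (?R `` {\<sigma> (\<sigma> m)})}"
    unfolding state_colorings_def Let_def links_def ..
  also have "\<dots> = card {h\<in>Hs n. (\<forall>(x,y)\<in>links S. h x = h y) \<and> alld h}"
    unfolding s by (rule quot_fun_card_pred[OF finNM links_sub])
  finally show ?thesis unfolding resp_def .
qed

lemma pointwise:
  fixes h :: "'d \<Rightarrow> nat"
  shows "of_bool (base h \<and> alld h) * (\<Prod>e\<in>ME. of_bool (one e h) + of_bool (zero e h))
     = of_bool (base h) * (of_bool (\<forall>e\<in>ME. de e h \<and> (one e h \<or> zero e h)) :: int)"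
proof (cases "alld h")
  case True
  have "(\<Prod>e\<in>ME. of_bool (one e h) + of_bool (zero e h)) = (\<Prod>e\<in>ME. (of_bool (de e h \<and> (one e h \<or> zero e h)) :: int))"
  proof (rule prod.cong[OF refl])
    fix e assume e: "e \<in> ME"
    have r: "rep e \<in> Mt" using ME_elem[OF e] by simp
    have ab: "h (\<sigma> (rep e)) \<noteq> h (\<sigma> (\<sigma> (rep e)))" using True r unfolding alld_def by blast
    have d: "de e h" using edge_forms(3)[OF e] ab by simp
    show "of_bool (one e h) + of_bool (zero e h) = (of_bool (de e h \<and> (one e h \<or> zero e h)) :: int)"
      unfolding edge_forms(1,2)[OF e] using edge_val2[OF ab] d by simp
  qed
  also have "\<dots> = of_bool (\<forall>e\<in>ME. de e h \<and> (one e h \<or> zero e h))" by (rule prod_of_bool[OF ME_fin])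
  finally show ?thesis using True by simp
next
  case False
  then obtain m where m: "m \<in> Mt" "h (\<sigma> m) = h (\<sigma> (\<sigma> m))" unfolding alld_def by blast
  have e0: "{m, \<alpha> m} \<in> ME" unfolding match_edges_def using m(1) by blast
  have aa: "\<alpha> (\<alpha> m) = m" using a_inv[OF Mt_D[OF m(1)]] .
  have "\<not> (de {m, \<alpha> m} h \<and> (one {m, \<alpha> m} h \<or> zero {m, \<alpha> m} h))"
  proof
    assume H: "de {m, \<alpha> m} h \<and> (one {m, \<alpha> m} h \<or> zero {m, \<alpha> m} h)"
    then have d: "h (\<sigma> (\<alpha> m)) \<noteq> h (\<sigma> (\<sigma> (\<alpha> m)))" using m(2) unfolding de_def by auto
    from H have "one {m, \<alpha> m} h \<or> zero {m, \<alpha> m} h" by blast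
    then show False
    proof
      assume "one {m, \<alpha> m} h"
      then have "h (\<sigma> (\<alpha> m)) = h (\<sigma> m)" "h (\<sigma> (\<sigma> (\<alpha> m))) = h (\<sigma> (\<sigma> m))" unfolding one_def by auto
      then show False using d m(2) by simp
    next
      assume "zero {m, \<alpha> m} h"
      then have "h (\<sigma> (\<sigma> (\<alpha> m))) = h (\<sigma> m)" "h (\<sigma> (\<alpha> m)) = h (\<sigma> (\<sigma> m))" unfolding zero_def by auto
      then show False using d m(2) by simp
    qed
  qed
  then have "\<not> (\<forall>e\<in>ME. de e h \<and> (one e h \<or> zero e h))" using e0 by blast
  then show ?thesis using False by simp
qed

lemma color_eq:
  "color_bracket D \<alpha> \<sigma> Mt n = (\<Sum>h\<in>Hs n. of_bool (base h) * of_bool (\<forall>e\<in>ME. de e h \<and> (one e h \<or> zero e h)))"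
proof -
  have "color_bracket D \<alpha> \<sigma> Mt n = (\<Sum>S\<in>Pow ME. \<Sum>h\<in>Hs n. (of_bool (resp S h \<and> alld h) :: int))"
    unfolding color_bracket_def sc_eq
    by (intro sum.cong refl) (rule sum_of_bool_int[OF Hs_fin, symmetric])
  also have "\<dots> = (\<Sum>h\<in>Hs n. \<Sum>S\<in>Pow ME. (of_bool (resp S h \<and> alld h) :: int))"
    by (rule sum.swap)
  also have "\<dots> = (\<Sum>h\<in>Hs n. \<Sum>S\<in>Pow ME. of_bool (base h \<and> alld h) *
      ((\<Prod>e\<in>S. of_bool (one e h)) * (\<Prod>e\<in>ME - S. of_bool (zero e h))))"
  proof (intro sum.cong refl)
    fix h :: "'d \<Rightarrow> nat" and S assume "S \<in> Pow ME"
    then have S: "S \<subseteq> ME" by blast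
    have fS: "finite S" using S ME_fin finite_subset by blast
    have fS2: "finite (ME - S)" using ME_fin by simp
    show "(of_bool (resp S h \<and> alld h) :: int) = of_bool (base h \<and> alld h) *
      ((\<Prod>e\<in>S. of_bool (one e h)) * (\<Prod>e\<in>ME - S. of_bool (zero e h)))"
      unfolding prod_of_bool[OF fS] prod_of_bool[OF fS2] resp_S[OF S] by auto
  qed
  also have "\<dots> = (\<Sum>h\<in>Hs n. of_bool (base h \<and> alld h) * (\<Prod>e\<in>ME. of_bool (one e h) + of_bool (zero e h)))"
    by (intro sum.cong refl) (simp add: sum_distrib_left[symmetric] prod_add[OF ME_fin])
  also have "\<dots> = (\<Sum>h\<in>Hs n. of_bool (base h) * of_bool (\<forall>e\<in>ME. de e h \<and> (one e h \<or> zero e h)))"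
    by (intro sum.cong refl) (rule pointwise)
  finally show ?thesis .
qed

end

theorem theorem4p10:
  fixes D :: "'d set" and alpha sigma :: "'d \<Rightarrow> 'd" and Mt :: "'d set" and n :: nat
  assumes "pm_diagram D alpha sigma Mt"
    and "n > 0"
  shows "pk_bracket D alpha sigma Mt n = color_bracket D alpha sigma Mt n"
proof -
  interpret pmd D alpha sigma Mt by unfold_locales (rule assms(1))
  show ?thesis using pk_eq color_eq by simp
qed

end
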